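(* For every order-embedding $\sigma\colon O\to O'$ between abstract posets and all causal markings $c,c'$ such that $O\rhd c$ and $O\rhd c'$ are P-markings, we have $O\rhd c\sim_{AC}O\rhd c'$ if and only if $O'\rhd\downarrow_{O'}(c\sigma)\sim_{AC}O'\rhd\downarrow_{O'}(c'\sigma)$.
   Context: Fix a set $Act$ of action labels, an infinite set $\mathcal{E}$ of event names, and a net $N=(S,T,F,l)$ (disjoint places $S$ and transitions $T$, $F\subseteq(S\times T)\cup(T\times S)$, $l\colon T\to Act$, ${}^\bullet t=\{s:(s,t)\in F\}$, $t^\bullet=\{s:(t,s)\in F\}$ nonempty). Posets are finite $Act$-labelled posets $O=(X_O,\preccurlyeq_O,l_O)$ with $X_O\subseteq\mathcal{E}$; $|O|=\{(x,l_O(x))\}$, $x_a=(x,a)$. Morphisms preserve order and labels ($\sigma(x_a)=\sigma(x)_a$); order-embeddings additionally reflect order; isomorphisms are bijective morphisms with morphism inverse. For $K\subseteq|O|$: $\max_O K$ its maximal elements; down-closed if $y\in K,x\preccurlyeq_O y\Rightarrow x\in K$; $\downarrow_O K=\{y\in|O|:\exists x\in K,\ y\preccurlyeq_O x\}$. Causal markings: finite sets $c$ of pairs $K\vdash s$ ($s\in S$, $K$ finite $\subseteq\mathcal{E}\times Act$); $\mathcal{K}(c)$ union of cause sets, $|c|$ set of places, $K\vdash m=\{K\vdash s:s\in m\}$, $c\sigma=\{\sigma(K)\vdash s\}$, $\downarrow_O c=\{\downarrow_O K\vdash s\}$. P-marking $O\rhd c$: all cause sets are down-closed subsets of $|O|$.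 $\delta(O,K,e_a)$: $O$ plus event $e\notin X_O$ labelled $a$ above all of $K$, reflexive-transitively closed. CG$_C$: $O\rhd c\cup c'\xrightarrow{K\vdash e_a}\delta(O,K,e_a)\rhd(\mathcal{K}(c)\cup\{e_a\}\vdash t^\bullet)\cup c'$ whenever $t\in T$, $O\rhd c\cup c'$ a P-marking, $|c|={}^\bullet t$, $a=l(t)$, $e\in\mathcal{E}\setminus X_O$, $K=\max_O\mathcal{K}(c)$. Fix canonical representatives $[O]_\cong$ of isomorphism classes of posets and isomorphisms $\alpha_O\colon O\to[O]_\cong$; $O$ is abstract if $[O]_\cong=O$. For abstract $O$: $\delta(O,K,a)=[\delta(O,K,e_a)]_\cong$, $new(O,K,a)$ its added event, $old(O,K,a)\colon O\to\delta(O,K,a)$ the embedding corresponding to the inclusion. CG$_{AC}$: for each CG$_C$ transition $O\rhd c\xrightarrow{K\vdash e_a}\delta(O,K,e_a)\rhd c'$, a transition $[O]_\cong\rhd c\alpha_O\stackrel{\alpha_O(K)\vdash a}{\Longrightarrow}\delta([O]_\cong,\alpha_O(K),a)\rhd c''$ where $c''$ is $c'$ renamed by $x\mapsto old([O]_\cong,\alpha_O(K),a)(\alpha_O(x))$ for $x\in X_O$ and $e_a\mapsto new([O]_\cong,\alpha_O(K),a)$. An abstract causal bisimulation is a family $\{R_O\}$ indexed by abstract posets of relations on P-markings with abstract posets such that: $(O_1\rhd c_1,O_2\rhd c_2)\in R_O$ implies $O_1=O_2=O$; and if $(O\rhd c_1,O\rhd c_2)\in R_O$ and $O\rhd c_1\stackrel{K\vdash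 a}{\Longrightarrow}O'\rhd c_1'$ then $O\rhd c_2\stackrel{K\vdash a}{\Longrightarrow}O'\rhd c_2'$ with $(O'\rhd c_1',O'\rhd c_2')\in R_{O'}$, and vice versa. $\sim_{AC}$ is the greatest one. *)

theory Defs
  imports Main
begin

text \<open>A net N = (S,T,F,l). Places and transitions have disjoint types 's and 't;
  the flow relation F is split into its S x T part and its T x S part.\<close>
record ('s, 't, 'a) net =
  places :: "'s set"
  transitions :: "'t set"
  flow_in  :: "('s \<times> 't) set"
  flow_out :: "('t \<times> 's) set"
  lab :: "'t \<Rightarrow> 'a"

definition preset :: "('s, 't, 'a) net \<Rightarrow> 't \<Rightarrow> 's set" where
  "preset N t = {s. (s, t) \<in> flow_in N}"

definition postset :: "('s, 't, 'a) net \<Rightarrow> 't \<Rightarrow> 's set" where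
  "postset N t = {s. (t, s) \<in> flow_out N}"

definition is_net :: "('s, 't, 'a) net \<Rightarrow> bool" where
  "is_net N \<longleftrightarrow> flow_in N \<subseteq> places N \<times> transitions N \<and> flow_out N \<subseteq> transitions N \<times> places N
     \<and> (\<forall>t\<in>transitions N. preset N t \<noteq> {} \<and> postset N t \<noteq> {})"

text \<open>A poset over event names 'e with labels 'a: a partial labelling map whose domain is
  the event set X_O, together with the order relation.\<close>
type_synonym ('e, 'a) poset = "('e \<Rightarrow> 'a option) \<times> ('e \<times> 'e) set"

definition evs :: "('e, 'a) poset \<Rightarrow> 'e set" where
  "evs P = dom (fst P)"

definition leq :: "('e, 'a) poset \<Rightarrow> 'e \<Rightarrow> 'e \<Rightarrow> bool" where
  "leq P x y \<longleftrightarrow> (x, y) \<in> snd P"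

definition elems :: "('e, 'a) poset \<Rightarrow> ('e \<times> 'a) set" where
  "elems P = {(x, a). fst P x = Some a}"

definition is_poset :: "('e, 'a) poset \<Rightarrow> bool" where
  "is_poset P \<longleftrightarrow> finite (evs P) \<and> snd P \<subseteq> evs P \<times> evs P \<and> refl_on (evs P) (snd P)
     \<and> antisym (snd P) \<and> trans (snd P)"

definition morphism :: "('e \<Rightarrow> 'e) \<Rightarrow> ('e, 'a) poset \<Rightarrow> ('e, 'a) poset \<Rightarrow> bool" where
  "morphism \<sigma> P Q \<longleftrightarrow>
     (\<forall>x\<in>evs P. \<sigma> x \<in> evs Q \<and> fst Q (\<sigma> x) = fst P x)
     \<and> (\<forall>x\<in>evs P. \<forall>y\<in>evs P. leq P x y \<longrightarrow> leq Q (\<sigma> x) (\<sigma> y))"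

definition order_embedding :: "('e \<Rightarrow> 'e) \<Rightarrow> ('e, 'a) poset \<Rightarrow> ('e, 'a) poset \<Rightarrow> bool" where
  "order_embedding \<sigma> P Q \<longleftrightarrow> morphism \<sigma> P Q
     \<and> (\<forall>x\<in>evs P. \<forall>y\<in>evs P. leq Q (\<sigma> x) (\<sigma> y) \<longrightarrow> leq P x y)"

definition poset_iso :: "('e \<Rightarrow> 'e) \<Rightarrow> ('e, 'a) poset \<Rightarrow> ('e, 'a) poset \<Rightarrow> bool" where
  "poset_iso \<sigma> P Q \<longleftrightarrow> morphism \<sigma> P Q \<and>
     (\<exists>\<tau>. morphism \<tau> Q P \<and> (\<forall>x\<in>evs P. \<tau> (\<sigma> x) = x) \<and> (\<forall>y\<in>evs Q. \<sigma> (\<tau> y) = y))"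

definition isomorphic :: "('e, 'a) poset \<Rightarrow> ('e, 'a) poset \<Rightarrow> bool" where
  "isomorphic P Q \<longleftrightarrow> (\<exists>\<sigma>. poset_iso \<sigma> P Q)"

definition leqE :: "('e, 'a) poset \<Rightarrow> ('e \<times> 'a) \<Rightarrow> ('e \<times> 'a) \<Rightarrow> bool" where
  "leqE P p q \<longleftrightarrow> leq P (fst p) (fst q)"

definition maxel :: "('e, 'a) poset \<Rightarrow> ('e \<times> 'a) set \<Rightarrow> ('e \<times> 'a) set" where
  "maxel P K = {x \<in> K. \<not> (\<exists>y\<in>K. y \<noteq> x \<and> leqE P x y)}"

definition down_closed :: "('e, 'a) poset \<Rightarrow> ('e \<times> 'a) set \<Rightarrow> bool" where
  "down_closed P K \<longleftrightarrow> (\<forall>y\<in>K. \<forall>x\<in>elems P. leqE P x y \<longrightarrow> x \<in> K)"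

definition downset :: "('e, 'a) poset \<Rightarrow> ('e \<times> 'a) set \<Rightarrow> ('e \<times> 'a) set" where
  "downset P K = {y \<in> elems P. \<exists>x\<in>K. leqE P y x}"

definition rename :: "('e \<Rightarrow> 'e) \<Rightarrow> ('e \<times> 'a) set \<Rightarrow> ('e \<times> 'a) set" where
  "rename \<sigma> K = (\<lambda>(x, a). (\<sigma> x, a)) ` K"

text \<open>A causal marking is a finite set of pairs (K, s), written K |- s.\<close>
type_synonym ('e, 'a, 's) cmarking = "(('e \<times> 'a) set \<times> 's) set"

definition causal_marking :: "('s, 't, 'a) net \<Rightarrow> ('e, 'a, 's) cmarking \<Rightarrow> bool" where
  "causal_marking N c \<longleftrightarrow> finite c \<and> (\<forall>(K, s)\<in>c. s \<in> places N \<and> finite K)"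

definition causes :: "('e, 'a, 's) cmarking \<Rightarrow> ('e \<times> 'a) set" where
  "causes c = \<Union> (fst ` c)"

definition marking_places :: "('e, 'a, 's) cmarking \<Rightarrow> 's set" where
  "marking_places c = snd ` c"

definition rename_m :: "('e \<Rightarrow> 'e) \<Rightarrow> ('e, 'a, 's) cmarking \<Rightarrow> ('e, 'a, 's) cmarking" where
  "rename_m \<sigma> c = (\<lambda>(K, s). (rename \<sigma> K, s)) ` c"

definition down_m :: "('e, 'a) poset \<Rightarrow> ('e, 'a, 's) cmarking \<Rightarrow> ('e, 'a, 's) cmarking" where
  "down_m P c = (\<lambda>(K, s). (downset P K, s)) ` c"

definition pmarking :: "('s, 't, 'a) net \<Rightarrow> ('e, 'a) poset \<Rightarrow> ('e, 'a, 's) cmarking \<Rightarrow> bool" where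
  "pmarking N P c \<longleftrightarrow> is_poset P \<and> causal_marking N c
     \<and> (\<forall>(K, s)\<in>c. K \<subseteq> elems P \<and> down_closed P K)"

definition delta :: "('e, 'a) poset \<Rightarrow> ('e \<times> 'a) set \<Rightarrow> 'e \<Rightarrow> 'a \<Rightarrow> ('e, 'a) poset" where
  "delta P K e a = ((fst P)(e \<mapsto> a),
     (snd P \<union> {(x, e) | x. x \<in> fst ` K})\<^sup>+ \<union> {(e, e)})"

definition cgc :: "('s, 't, 'a) net \<Rightarrow> ('e, 'a) poset \<Rightarrow> ('e, 'a, 's) cmarking
    \<Rightarrow> ('e \<times> 'a) set \<Rightarrow> 'e \<Rightarrow> 'a \<Rightarrow> ('e, 'a) poset \<Rightarrow> ('e, 'a, 's) cmarking \<Rightarrow> bool" where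
  "cgc N P d K e a Q d' \<longleftrightarrow>
     (\<exists>t c c'. t \<in> transitions N \<and> d = c \<union> c' \<and> pmarking N P (c \<union> c')
        \<and> marking_places c = preset N t \<and> a = lab N t \<and> e \<notin> evs P
        \<and> K = maxel P (causes c) \<and> Q = delta P K e a
        \<and> d' = ((\<lambda>s. (insert (e, a) (causes c), s)) ` postset N t) \<union> c')"

definition valid_canon :: "(('e, 'a) poset \<Rightarrow> ('e, 'a) poset) \<Rightarrow> (('e, 'a) poset \<Rightarrow> 'e \<Rightarrow> 'e) \<Rightarrow> bool" where
  "valid_canon canon alpha \<longleftrightarrow>
     (\<forall>P. is_poset P \<longrightarrow> is_poset (canon P) \<and> poset_iso (alpha P) P (canon P)
        \<and> (\<forall>Q. is_poset Q \<and> isomorphic P Q \<longrightarrow> canon Q = canon P))"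

definition abstract :: "(('e, 'a) poset \<Rightarrow> ('e, 'a) poset) \<Rightarrow> ('e, 'a) poset \<Rightarrow> bool" where
  "abstract canon P \<longleftrightarrow> is_poset P \<and> canon P = P"

text \<open>A fixed choice of fresh event used to define delta, new and old on abstract posets.\<close>
definition fresh :: "('e, 'a) poset \<Rightarrow> 'e" where
  "fresh P = (SOME e. e \<notin> evs P)"

definition deltaA :: "(('e, 'a) poset \<Rightarrow> ('e, 'a) poset) \<Rightarrow> ('e, 'a) poset \<Rightarrow> ('e \<times> 'a) set \<Rightarrow> 'a
    \<Rightarrow> ('e, 'a) poset" where
  "deltaA canon P K a = canon (delta P K (fresh P) a)"

definition newA :: "(('e, 'a) poset \<Rightarrow> 'e \<Rightarrow> 'e) \<Rightarrow> ('e, 'a) poset \<Rightarrow> ('e \<times> 'a) set \<Rightarrow> 'a \<Rightarrow> 'e" where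
  "newA alpha P K a = alpha (delta P K (fresh P) a) (fresh P)"

definition oldA :: "(('e, 'a) poset \<Rightarrow> 'e \<Rightarrow> 'e) \<Rightarrow> ('e, 'a) poset \<Rightarrow> ('e \<times> 'a) set \<Rightarrow> 'a \<Rightarrow> 'e \<Rightarrow> 'e" where
  "oldA alpha P K a = alpha (delta P K (fresh P) a)"

definition cgac :: "('s, 't, 'a) net \<Rightarrow> (('e, 'a) poset \<Rightarrow> ('e, 'a) poset) \<Rightarrow> (('e, 'a) poset \<Rightarrow> 'e \<Rightarrow> 'e)
    \<Rightarrow> ('e, 'a) poset \<Rightarrow> ('e, 'a, 's) cmarking \<Rightarrow> ('e \<times> 'a) set \<Rightarrow> 'a
    \<Rightarrow> ('e, 'a) poset \<Rightarrow> ('e, 'a, 's) cmarking \<Rightarrow> bool" where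
  "cgac N canon alpha P d K a Q d'' \<longleftrightarrow>
     (\<exists>P0 d0 K0 e P1 d1. cgc N P0 d0 K0 e a P1 d1
        \<and> P = canon P0 \<and> d = rename_m (alpha P0) d0 \<and> K = rename (alpha P0) K0
        \<and> Q = deltaA canon P K a
        \<and> d'' = rename_m (\<lambda>x. if x = e then newA alpha P K a else oldA alpha P K a (alpha P0 x)) d1)"

definition abs_causal_bisim :: "('s, 't, 'a) net \<Rightarrow> (('e, 'a) poset \<Rightarrow> ('e, 'a) poset)
    \<Rightarrow> (('e, 'a) poset \<Rightarrow> 'e \<Rightarrow> 'e)
    \<Rightarrow> (('e, 'a) poset \<Rightarrow> ('e, 'a, 's) cmarking \<Rightarrow> ('e, 'a, 's) cmarking \<Rightarrow> bool) \<Rightarrow> bool" where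
  "abs_causal_bisim N canon alpha R \<longleftrightarrow>
     (\<forall>P c1 c2. R P c1 c2 \<longrightarrow>
        abstract canon P \<and> pmarking N P c1 \<and> pmarking N P c2
        \<and> (\<forall>K a Q c1'. cgac N canon alpha P c1 K a Q c1' \<longrightarrow>
             (\<exists>c2'. cgac N canon alpha P c2 K a Q c2' \<and> R Q c1' c2'))
        \<and> (\<forall>K a Q c2'. cgac N canon alpha P c2 K a Q c2' \<longrightarrow>
             (\<exists>c1'. cgac N canon alpha P c1 K a Q c1' \<and> R Q c1' c2')))"

definition sim_AC :: "('s, 't, 'a) net \<Rightarrow> (('e, 'a) poset \<Rightarrow> ('e, 'a) poset)
    \<Rightarrow> (('e, 'a) poset \<Rightarrow> 'e \<Rightarrow> 'e)
    \<Rightarrow> ('e, 'a) poset \<Rightarrow> ('e, 'a, 's) cmarking \<Rightarrow> ('e, 'a, 's) cmarking \<Rightarrow> bool" where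
  "sim_AC N canon alpha P c1 c2 \<longleftrightarrow> (\<exists>R. abs_causal_bisim N canon alpha R \<and> R P c1 c2)"

end

theory Submission
  imports Defs
begin


lemma evs_elems: "x \<in> evs P \<longleftrightarrow> (\<exists>a. (x,a) \<in> elems P)"
  by (auto simp: evs_def elems_def)
lemma elems_evs: "(x,a) \<in> elems P \<Longrightarrow> x \<in> evs P"
  by (auto simp: evs_def elems_def)
lemma elems_fun: "(x,a) \<in> elems P \<Longrightarrow> (x,b) \<in> elems P \<Longrightarrow> a = b"
  by (auto simp: elems_def)
lemma elems_iff: "(x,a) \<in> elems P \<longleftrightarrow> fst P x = Some a"
  by (auto simp: elems_def)

lemma poset_leq_evs: "is_poset P \<Longrightarrow> leq P x y \<Longrightarrow> x \<in> evs P \<and> y \<in> evs P"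
  by (auto simp: is_poset_def leq_def)
lemma poset_refl: "is_poset P \<Longrightarrow> x \<in> evs P \<Longrightarrow> leq P x x"
  by (auto simp: is_poset_def leq_def refl_on_def)
lemma poset_antisym: "is_poset P \<Longrightarrow> leq P x y \<Longrightarrow> leq P y x \<Longrightarrow> x = y"
  by (auto simp: is_poset_def leq_def antisym_def)
lemma poset_trans: "is_poset P \<Longrightarrow> leq P x y \<Longrightarrow> leq P y z \<Longrightarrow> leq P x z"
  by (auto simp: is_poset_def leq_def trans_def)
lemma finite_elems: "is_poset P \<Longrightarrow> finite (elems P)"
proof -
  assume "is_poset P"
  hence "finite (evs P)" by (simp add: is_poset_def)
  moreover have "elems P = (\<lambda>x. (x, the (fst P x))) ` evs P"
    by (force simp: elems_def evs_def)
  ultimately show ?thesis by simp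
qed

lemma morph_evs: "morphism \<sigma> P Q \<Longrightarrow> x \<in> evs P \<Longrightarrow> \<sigma> x \<in> evs Q"
  by (simp add: morphism_def)
lemma morph_lab: "morphism \<sigma> P Q \<Longrightarrow> x \<in> evs P \<Longrightarrow> fst Q (\<sigma> x) = fst P x"
  by (simp add: morphism_def)
lemma morph_elems: "morphism \<sigma> P Q \<Longrightarrow> (x,a) \<in> elems P \<Longrightarrow> (\<sigma> x, a) \<in> elems Q"
  by (metis elems_evs elems_iff morph_lab)
lemma morph_leq: "morphism \<sigma> P Q \<Longrightarrow> x \<in> evs P \<Longrightarrow> y \<in> evs P \<Longrightarrow> leq P x y \<Longrightarrow> leq Q (\<sigma> x) (\<sigma> y)"
  by (simp add: morphism_def)
lemma emb_morph: "order_embedding \<sigma> P Q \<Longrightarrow> morphism \<sigma> P Q"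
  by (simp add: order_embedding_def)
lemma emb_leq_iff: "order_embedding \<sigma> P Q \<Longrightarrow> x \<in> evs P \<Longrightarrow> y \<in> evs P \<Longrightarrow> leq Q (\<sigma> x) (\<sigma> y) \<longleftrightarrow> leq P x y"
  by (auto simp: order_embedding_def morphism_def)
lemma emb_inj: "is_poset P \<Longrightarrow> is_poset Q \<Longrightarrow> order_embedding \<sigma> P Q \<Longrightarrow> inj_on \<sigma> (evs P)"
proof (rule inj_onI)
  fix x y assume P: "is_poset P" and Q: "is_poset Q" and e: "order_embedding \<sigma> P Q"
    and x: "x \<in> evs P" and y: "y \<in> evs P" and eq: "\<sigma> x = \<sigma> y"
  have sx: "\<sigma> x \<in> evs Q" using e x by (simp add: order_embedding_def morphism_def)
  have "leq Q (\<sigma> x) (\<sigma> y)" "leq Q (\<sigma> y) (\<sigma> x)" using poset_refl[OF Q sx] eq by auto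
  hence "leq P x y" "leq P y x" using emb_leq_iff[OF e] x y by auto
  thus "x = y" using poset_antisym[OF P] by blast
qed

lemma morph_comp: "morphism \<sigma> P Q \<Longrightarrow> morphism \<tau> Q R \<Longrightarrow> morphism (\<tau> \<circ> \<sigma>) P R"
  unfolding morphism_def comp_def by (intro conjI ballI impI) auto
lemma emb_comp: "order_embedding \<sigma> P Q \<Longrightarrow> order_embedding \<tau> Q R \<Longrightarrow> order_embedding (\<tau> \<circ> \<sigma>) P R"
  unfolding order_embedding_def
  apply (intro conjI ballI impI)
   apply (blast intro: morph_comp)
  by (metis comp_apply morph_evs)

lemma iso_emb: "poset_iso \<beta> P Q \<Longrightarrow> order_embedding \<beta> P Q"
proof -
  assume "poset_iso \<beta> P Q"
  then obtain \<tau> where m: "morphism \<beta> P Q" and t: "morphism \<tau> Q P" and inv: "\<forall>x\<in>evs P. \<tau> (\<beta> x) = x"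
    unfolding poset_iso_def by blast
  have "\<forall>x\<in>evs P. \<forall>y\<in>evs P. leq Q (\<beta> x) (\<beta> y) \<longrightarrow> leq P x y"
  proof (intro ballI impI)
    fix x y assume x: "x \<in> evs P" and y: "y \<in> evs P" and l: "leq Q (\<beta> x) (\<beta> y)"
    have "leq P (\<tau> (\<beta> x)) (\<tau> (\<beta> y))" using morph_leq[OF t morph_evs[OF m x] morph_evs[OF m y] l] .
    thus "leq P x y" using inv x y by simp
  qed
  thus ?thesis using m by (simp add: order_embedding_def)
qed
lemma iso_surj: "poset_iso \<beta> P Q \<Longrightarrow> y \<in> evs Q \<Longrightarrow> \<exists>x\<in>evs P. \<beta> x = y"
  unfolding poset_iso_def using morph_evs by metis
lemma iso_inv: "poset_iso \<beta> P Q \<Longrightarrow> \<exists>\<tau>. poset_iso \<tau> Q P \<and> (\<forall>x\<in>evs P. \<tau> (\<beta> x) = x) \<and> (\<forall>y\<in>evs Q. \<beta> (\<tau> y) = y)"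
  unfolding poset_iso_def by blast



definition tokwf :: "('e,'a) poset \<Rightarrow> ('e,'a,'s) cmarking \<Rightarrow> bool" where
  "tokwf P d \<longleftrightarrow> (\<forall>(K,s)\<in>d. K \<subseteq> elems P \<and> down_closed P K)"

definition gm :: "('e \<Rightarrow> 'e) \<Rightarrow> ('e,'a) poset \<Rightarrow> (('e \<times> 'a) set \<times> 's) \<Rightarrow> (('e \<times> 'a) set \<times> 's)" where
  "gm \<sigma> Q = (\<lambda>(K,s). (downset Q (rename \<sigma> K), s))"

lemma gm_apply[simp]: "gm \<sigma> Q (K,s) = (downset Q (rename \<sigma> K), s)"
  by (simp add: gm_def)

lemma down_rename_gm: "down_m Q (rename_m \<sigma> d) = gm \<sigma> Q ` d"
  unfolding down_m_def rename_m_def gm_def image_image by (simp add: split_def)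

lemma pmarking_tokwf: "pmarking N P d \<Longrightarrow> tokwf P d"
  unfolding pmarking_def tokwf_def by blast

lemma tokwfD: "tokwf P d \<Longrightarrow> (K,s) \<in> d \<Longrightarrow> K \<subseteq> elems P \<and> down_closed P K"
  unfolding tokwf_def by blast

lemma tokwf_Un: "tokwf P (c \<union> c') \<longleftrightarrow> tokwf P c \<and> tokwf P c'"
  unfolding tokwf_def by blast

lemma rename_mem: "(y,b) \<in> rename \<sigma> K \<longleftrightarrow> (\<exists>x. (x,b) \<in> K \<and> y = \<sigma> x)"
  unfolding rename_def by force
lemma rename_elems: "morphism \<sigma> P Q \<Longrightarrow> K \<subseteq> elems P \<Longrightarrow> rename \<sigma> K \<subseteq> elems Q"
  unfolding rename_def using morph_elems by fastforce
lemma rename_cong: "(\<forall>x\<in>evs P. f x = g x) \<Longrightarrow> K \<subseteq> elems P \<Longrightarrow> rename f K = rename g K"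
  unfolding rename_def by (rule image_cong) (auto dest: elems_evs)
lemma rename_comp: "rename f (rename g K) = rename (f \<circ> g) K"
  unfolding rename_def image_image by (auto simp: split_def)
lemma rename_id: "rename (\<lambda>x. x) K = K"
  unfolding rename_def by (auto simp: split_def)
lemma rename_id': "rename id K = K"
  unfolding rename_def by (auto simp: split_def)
lemma rename_Un: "rename \<sigma> (A \<union> B) = rename \<sigma> A \<union> rename \<sigma> B"
  unfolding rename_def by (simp add: image_Un)
lemma rename_insert: "rename \<sigma> (insert (x,a) K) = insert (\<sigma> x, a) (rename \<sigma> K)"
  unfolding rename_def by simp
lemma rename_Union: "rename \<sigma> (\<Union>A) = \<Union>(rename \<sigma> ` A)"
  unfolding rename_def by blast
lemma rename_mono: "A \<subseteq> B \<Longrightarrow> rename \<sigma> A \<subseteq> rename \<sigma> B"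
  unfolding rename_def by blast
lemma fst_rename: "fst ` rename \<sigma> K = \<sigma> ` fst ` K"
  unfolding rename_def by force

lemma pair_inj_on:
  assumes "inj_on \<sigma> (evs P)"
  shows "inj_on (\<lambda>(x, a). (\<sigma> x, a)) (elems P)"
  using assms unfolding inj_on_def by (auto dest: elems_evs)

lemma rename_inj:
  assumes "is_poset P" "is_poset Q" "order_embedding \<sigma> P Q" "K1 \<subseteq> elems P" "K2 \<subseteq> elems P"
    "rename \<sigma> K1 = rename \<sigma> K2"
  shows "K1 = K2"
proof -
  have "inj_on (\<lambda>(x, a). (\<sigma> x, a)) (elems P)" using pair_inj_on emb_inj assms(1-3) by blast
  thus ?thesis using assms(4-6) unfolding rename_def by (simp add: inj_on_image_eq_iff)
qed

lemma downset_mem: "y \<in> downset Q S \<longleftrightarrow> y \<in> elems Q \<and> (\<exists>x\<in>S. leq Q (fst y) (fst x))"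
  unfolding downset_def leqE_def by blast
lemma downset_sub: "downset Q S \<subseteq> elems Q"
  unfolding downset_def by blast
lemma downset_sup: "is_poset Q \<Longrightarrow> S \<subseteq> elems Q \<Longrightarrow> S \<subseteq> downset Q S"
  unfolding downset_def leqE_def by (force intro: poset_refl dest: elems_evs)
lemma downset_closed: "is_poset Q \<Longrightarrow> down_closed Q (downset Q S)"
  unfolding down_closed_def downset_def leqE_def by (blast intro: poset_trans)
lemma downset_id: "is_poset Q \<Longrightarrow> S \<subseteq> elems Q \<Longrightarrow> down_closed Q S \<Longrightarrow> downset Q S = S"
proof (rule equalityI)
  assume Q: "is_poset Q" and S: "S \<subseteq> elems Q" and c: "down_closed Q S"
  show "downset Q S \<subseteq> S"
  proof
    fix y assume "y \<in> downset Q S"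
    then obtain x where "y \<in> elems Q" "x \<in> S" "leqE Q y x" unfolding downset_def by blast
    thus "y \<in> S" using c unfolding down_closed_def by blast
  qed
  show "S \<subseteq> downset Q S" using downset_sup[OF Q S] .
qed
lemma downset_Union: "downset Q (\<Union>A) = \<Union>(downset Q ` A)"
  unfolding downset_def by blast
lemma downset_Un: "downset Q (A \<union> B) = downset Q A \<union> downset Q B"
  unfolding downset_def by blast
lemma downset_mono: "A \<subseteq> B \<Longrightarrow> downset Q A \<subseteq> downset Q B"
  unfolding downset_def by blast
lemma downset_downset: "is_poset Q \<Longrightarrow> downset Q (downset Q S) = downset Q S"
  by (simp add: downset_closed downset_id downset_sub)

lemma down_emb_mem:
  assumes P: "is_poset P" and Q: "is_poset Q" and e: "order_embedding \<sigma> P Q"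
    and K: "K \<subseteq> elems P" "down_closed P K" and x: "(x,a) \<in> elems P"
  shows "(\<sigma> x, a) \<in> downset Q (rename \<sigma> K) \<longleftrightarrow> (x,a) \<in> K"
proof
  assume "(\<sigma> x, a) \<in> downset Q (rename \<sigma> K)"
  then obtain w where w: "w \<in> rename \<sigma> K" "leq Q (\<sigma> x) (fst w)"
    unfolding downset_mem by auto
  obtain y b where yb0: "(y,b) \<in> K" "w = (\<sigma> y, b)" using w(1) unfolding rename_def by auto
  have yb: "(y,b) \<in> K" "leq Q (\<sigma> x) (\<sigma> y)" using yb0 w(2) by auto
  have ye: "y \<in> evs P" by (rule elems_evs[OF subsetD[OF K(1) yb(1)]])
  have xe: "x \<in> evs P" by (rule elems_evs[OF x])
  have "leq P x y" using yb(2) emb_leq_iff[OF e xe ye] by simp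
  hence "leqE P (x,a) (y,b)" by (simp add: leqE_def)
  moreover have "\<forall>y\<in>K. \<forall>x\<in>elems P. leqE P x y \<longrightarrow> x \<in> K" using K(2) unfolding down_closed_def .
  ultimately show "(x,a) \<in> K" using yb(1) x by blast
next
  assume "(x,a) \<in> K"
  hence "(\<sigma> x, a) \<in> rename \<sigma> K" unfolding rename_def by force
  moreover have "rename \<sigma> K \<subseteq> elems Q" using rename_elems[OF emb_morph[OF e] K(1)] .
  ultimately show "(\<sigma> x, a) \<in> downset Q (rename \<sigma> K)" using downset_sup[OF Q] by blast
qed

lemma down_emb_inj:
  assumes P: "is_poset P" and Q: "is_poset Q" and e: "order_embedding \<sigma> P Q"
    and K1: "K1 \<subseteq> elems P" "down_closed P K1" and K2: "K2 \<subseteq> elems P" "down_closed P K2"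
    and eq: "downset Q (rename \<sigma> K1) = downset Q (rename \<sigma> K2)"
  shows "K1 = K2"
proof (rule set_eqI)
  fix z show "z \<in> K1 \<longleftrightarrow> z \<in> K2"
  proof (cases z)
    case (Pair x a)
    show ?thesis
    proof
      assume "z \<in> K1"
      hence x: "(x,a) \<in> elems P" using K1 Pair by auto
      show "z \<in> K2" using down_emb_mem[OF P Q e K1 x] down_emb_mem[OF P Q e K2 x] eq Pair \<open>z \<in> K1\<close> by simp
    next
      assume "z \<in> K2"
      hence x: "(x,a) \<in> elems P" using K2 Pair by auto
      show "z \<in> K1" using down_emb_mem[OF P Q e K1 x] down_emb_mem[OF P Q e K2 x] eq Pair \<open>z \<in> K2\<close> by simp
    qed
  qed
qed

lemma down_surj:
  assumes P: "is_poset P" and Q: "is_poset Q" and e: "order_embedding \<sigma> P Q"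
    and s: "\<forall>y\<in>evs Q. \<exists>x\<in>evs P. \<sigma> x = y"
    and K: "K \<subseteq> elems P" "down_closed P K"
  shows "downset Q (rename \<sigma> K) = rename \<sigma> K"
proof (rule equalityI)
  show "downset Q (rename \<sigma> K) \<subseteq> rename \<sigma> K"
  proof
    fix z assume z: "z \<in> downset Q (rename \<sigma> K)"
    obtain y b where zy: "z = (y,b)" by (cases z)
    have "(y,b) \<in> elems Q" using z zy downset_sub by blast
    have "y \<in> evs Q" by (rule elems_evs[OF \<open>(y,b) \<in> elems Q\<close>])
    then obtain x where x: "x \<in> evs P" "\<sigma> x = y" using s by blast
    have "fst Q (\<sigma> x) = fst P x" using morph_lab[OF emb_morph[OF e] x(1)] .
    hence xb: "(x,b) \<in> elems P" using \<open>(y,b) \<in> elems Q\<close> x by (simp add: elems_iff)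
    have "(x,b) \<in> K" using down_emb_mem[OF P Q e K xb] z zy x by simp
    thus "z \<in> rename \<sigma> K" using zy x unfolding rename_def by force
  qed
next
  show "rename \<sigma> K \<subseteq> downset Q (rename \<sigma> K)"
    using downset_sup[OF Q rename_elems[OF emb_morph[OF e] K(1)]] .
qed

lemma down_comp:
  assumes Q: "is_poset Q" and R: "is_poset R" and t: "morphism \<tau> Q R" and S: "S \<subseteq> elems Q"
  shows "downset R (rename \<tau> (downset Q S)) = downset R (rename \<tau> S)"
proof (rule equalityI)
  show "downset R (rename \<tau> S) \<subseteq> downset R (rename \<tau> (downset Q S))"
    by (intro downset_mono rename_mono downset_sup[OF Q S])
next
  show "downset R (rename \<tau> (downset Q S)) \<subseteq> downset R (rename \<tau> S)"
  proof
    fix z assume "z \<in> downset R (rename \<tau> (downset Q S))"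
    then obtain w where z: "z \<in> elems R" and w: "w \<in> rename \<tau> (downset Q S)" "leq R (fst z) (fst w)"
      unfolding downset_mem by blast
    obtain y b where yb: "(y,b) \<in> downset Q S" "w = (\<tau> y, b)" using w(1) unfolding rename_def by auto
    obtain x where x: "x \<in> S" "leq Q y (fst x)" using yb(1) unfolding downset_mem by auto
    have ye: "y \<in> evs Q" by (rule elems_evs[OF subsetD[OF downset_sub yb(1)]])
    have xe: "fst x \<in> evs Q" using elems_evs[of "fst x" "snd x" Q] subsetD[OF S x(1)] by simp
    have "leq R (\<tau> y) (\<tau> (fst x))" using morph_leq[OF t ye xe x(2)] .
    hence "leq R (fst z) (\<tau> (fst x))" using w(2) yb(2) poset_trans[OF R] by auto
    moreover have "(\<tau> (fst x), snd x) \<in> rename \<tau> S" using x(1) unfolding rename_def by force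
    ultimately show "z \<in> downset R (rename \<tau> S)" using z unfolding downset_mem by force
  qed
qed

lemma causes_gm: "causes (gm \<sigma> Q ` c) = downset Q (rename \<sigma> (causes c))"
proof -
  have "fst ` gm \<sigma> Q ` c = (\<lambda>K. downset Q (rename \<sigma> K)) ` fst ` c"
    unfolding image_image by (auto simp: gm_def split_def)
  thus ?thesis unfolding causes_def rename_Union downset_Union image_image by simp
qed
lemma places_gm: "marking_places (gm \<sigma> Q ` c) = marking_places c"
  unfolding marking_places_def image_image by (auto simp: gm_def split_def)
lemma causes_Un: "causes (A \<union> B) = causes A \<union> causes B"
  unfolding causes_def by blast
lemma places_Un: "marking_places (A \<union> B) = marking_places A \<union> marking_places B"
  unfolding marking_places_def by blast

lemma tokwf_causes: "tokwf P c \<Longrightarrow> causes c \<subseteq> elems P"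
  unfolding tokwf_def causes_def by fastforce
lemma tokwf_causes_closed: "tokwf P c \<Longrightarrow> down_closed P (causes c)"
  unfolding tokwf_def causes_def down_closed_def by fastforce
lemma tokwf_gm: "is_poset Q \<Longrightarrow> tokwf Q (gm \<sigma> Q ` c)"
  unfolding tokwf_def using downset_sub[of Q] downset_closed[of Q] by (auto simp: gm_def)

lemma finite_downset: "is_poset Q \<Longrightarrow> finite (downset Q S)"
  by (rule finite_subset[OF downset_sub finite_elems])

lemma pmarking_gm:
  assumes "pmarking N P c" "is_poset Q"
  shows "pmarking N Q (gm \<sigma> Q ` c)"
proof -
  have "causal_marking N (gm \<sigma> Q ` c)"
    using assms finite_downset[OF assms(2)] unfolding pmarking_def causal_marking_def by (auto simp: gm_def)
  moreover have "tokwf Q (gm \<sigma> Q ` c)" by (rule tokwf_gm[OF assms(2)])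
  ultimately show ?thesis using assms(2) unfolding pmarking_def tokwf_def by blast
qed

lemma gm_comp:
  assumes "is_poset Q" "is_poset R" "morphism \<tau> Q R" "morphism \<sigma> P Q" "tokwf P d"
  shows "gm \<tau> R ` (gm \<sigma> Q ` d) = gm (\<tau> \<circ> \<sigma>) R ` d"
  unfolding image_image
proof (rule image_cong[OF refl])
  fix k assume "k \<in> d"
  obtain K s where k: "k = (K,s)" by (cases k)
  have K: "K \<subseteq> elems P" using tokwfD[OF assms(5)] \<open>k \<in> d\<close> k by blast
  have "downset R (rename \<tau> (downset Q (rename \<sigma> K))) = downset R (rename (\<tau> \<circ> \<sigma>) K)"
    using down_comp[OF assms(1-3) rename_elems[OF assms(4) K]] rename_comp by metis
  thus "gm \<tau> R (gm \<sigma> Q k) = gm (\<tau> \<circ> \<sigma>) R k" using k by simp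
qed

lemma gm_cong:
  assumes "\<forall>x\<in>evs P. f x = g x" "tokwf P d"
  shows "gm f Q ` d = gm g Q ` d"
proof (rule image_cong[OF refl])
  fix k assume "k \<in> d"
  obtain K s where k: "k = (K,s)" by (cases k)
  have K: "K \<subseteq> elems P" using tokwfD[OF assms(2)] \<open>k \<in> d\<close> k by blast
  show "gm f Q k = gm g Q k" using rename_cong[OF assms(1) K] k by simp
qed

lemma gm_surj:
  assumes "is_poset P" "is_poset Q" "order_embedding \<sigma> P Q" "\<forall>y\<in>evs Q. \<exists>x\<in>evs P. \<sigma> x = y" "tokwf P d"
  shows "gm \<sigma> Q ` d = rename_m \<sigma> d"
  unfolding rename_m_def
proof (rule image_cong[OF refl])
  fix k assume "k \<in> d"
  obtain K s where k: "k = (K,s)" by (cases k)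
  have K: "K \<subseteq> elems P" "down_closed P K" using tokwfD[OF assms(5)] \<open>k \<in> d\<close> k by auto
  show "gm \<sigma> Q k = (case k of (K, s) \<Rightarrow> (rename \<sigma> K, s))" using down_surj[OF assms(1-4) K] k by simp
qed

lemma gm_id:
  assumes "is_poset P" "tokwf P d"
  shows "gm (\<lambda>x. x) P ` d = d"
proof -
  have "gm (\<lambda>x. x) P ` d = (\<lambda>k. k) ` d"
  proof (rule image_cong[OF refl])
    fix k assume "k \<in> d"
    obtain K s where k: "k = (K,s)" by (cases k)
    have K: "K \<subseteq> elems P" "down_closed P K" using tokwfD[OF assms(2)] \<open>k \<in> d\<close> k by auto
    show "gm (\<lambda>x. x) P k = k" using k downset_id[OF assms(1) K] by (simp add: rename_id)
  qed
  thus ?thesis by simp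
qed

lemma gm_inj_on:
  assumes "is_poset P" "is_poset Q" "order_embedding \<sigma> P Q" "tokwf P d"
  shows "inj_on (gm \<sigma> Q) d"
proof (rule inj_onI)
  fix k1 k2 assume k: "k1 \<in> d" "k2 \<in> d" "gm \<sigma> Q k1 = gm \<sigma> Q k2"
  obtain K1 s1 where k1: "k1 = (K1,s1)" by (cases k1)
  obtain K2 s2 where k2: "k2 = (K2,s2)" by (cases k2)
  have K1: "K1 \<subseteq> elems P" "down_closed P K1" using tokwfD[OF assms(4)] k k1 by auto
  have K2: "K2 \<subseteq> elems P" "down_closed P K2" using tokwfD[OF assms(4)] k k2 by auto
  have "K1 = K2" using down_emb_inj[OF assms(1-3) K1 K2] k k1 k2 by simp
  thus "k1 = k2" using k k1 k2 by simp
qed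

lemma maxel_sub: "maxel P K \<subseteq> K"
  unfolding maxel_def by blast

lemma maxel_downset:
  assumes Q: "is_poset Q" and S: "S \<subseteq> elems Q"
  shows "maxel Q (downset Q S) = maxel Q S"
proof (rule set_eqI)
  fix x
  have sup: "S \<subseteq> downset Q S" using downset_sup[OF Q S] .
  show "x \<in> maxel Q (downset Q S) \<longleftrightarrow> x \<in> maxel Q S"
  proof
    assume x: "x \<in> maxel Q (downset Q S)"
    hence xd: "x \<in> downset Q S" and nm: "\<not> (\<exists>y\<in>downset Q S. y \<noteq> x \<and> leqE Q x y)"
      unfolding maxel_def by auto
    obtain s where s: "s \<in> S" "leq Q (fst x) (fst s)" using xd unfolding downset_mem by auto
    have "s = x" using nm s sup unfolding leqE_def by blast
    hence "x \<in> S" using s by simp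
    thus "x \<in> maxel Q S" using nm sup unfolding maxel_def by blast
  next
    assume x: "x \<in> maxel Q S"
    hence xS: "x \<in> S" and nm: "\<not> (\<exists>y\<in>S. y \<noteq> x \<and> leqE Q x y)" unfolding maxel_def by auto
    have "\<not> (\<exists>y\<in>downset Q S. y \<noteq> x \<and> leqE Q x y)"
    proof
      assume "\<exists>y\<in>downset Q S. y \<noteq> x \<and> leqE Q x y"
      then obtain y where y: "y \<in> downset Q S" "y \<noteq> x" "leq Q (fst x) (fst y)" unfolding leqE_def by blast
      obtain s where s: "s \<in> S" "leq Q (fst y) (fst s)" using y(1) unfolding downset_mem by auto
      have xs: "leq Q (fst x) (fst s)" using poset_trans[OF Q y(3) s(2)] .
      hence "s = x" using nm s(1) unfolding leqE_def by blast
      hence "fst y = fst x" using poset_antisym[OF Q] y(3) s(2) by blast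
      moreover have "y \<in> elems Q" "x \<in> elems Q" using subsetD[OF downset_sub y(1)] subsetD[OF S xS] by auto
      ultimately have "y = x" using elems_fun by (metis prod.collapse)
      thus False using y(2) by simp
    qed
    thus "x \<in> maxel Q (downset Q S)" using xS sup unfolding maxel_def by blast
  qed
qed

lemma maxel_rename:
  assumes P: "is_poset P" and Q: "is_poset Q" and e: "order_embedding \<sigma> P Q" and S: "S \<subseteq> elems P"
  shows "maxel Q (rename \<sigma> S) = rename \<sigma> (maxel P S)"
proof -
  let ?f = "\<lambda>(x, a). (\<sigma> x, a)"
  have inj: "inj_on ?f (elems P)" using pair_inj_on emb_inj[OF P Q e] by blast
  have le: "\<And>u v. u \<in> S \<Longrightarrow> v \<in> S \<Longrightarrow> leqE Q (?f u) (?f v) \<longleftrightarrow> leqE P u v"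
  proof -
    fix u v assume u: "u \<in> S" and v: "v \<in> S"
    have ue: "fst u \<in> evs P" using elems_evs[of "fst u" "snd u" P] subsetD[OF S u] by simp
    have ve: "fst v \<in> evs P" using elems_evs[of "fst v" "snd v" P] subsetD[OF S v] by simp
    show "leqE Q (?f u) (?f v) \<longleftrightarrow> leqE P u v"
      unfolding leqE_def using emb_leq_iff[OF e ue ve] by (simp add: split_def)
  qed
  have ne: "\<And>u v. u \<in> S \<Longrightarrow> v \<in> S \<Longrightarrow> ?f u = ?f v \<longleftrightarrow> u = v"
    using inj S unfolding inj_on_def by blast
  show ?thesis
    unfolding rename_def maxel_def
  proof (rule set_eqI)
    fix z
    show "z \<in> {x \<in> ?f ` S. \<not> (\<exists>y\<in>?f ` S. y \<noteq> x \<and> leqE Q x y)} \<longleftrightarrow>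
          z \<in> ?f ` {x \<in> S. \<not> (\<exists>y\<in>S. y \<noteq> x \<and> leqE P x y)}"
      using le ne by blast
  qed
qed



lemma fst_delta: "fst (delta P K e a) = (fst P)(e \<mapsto> a)"
  by (simp add: delta_def)
lemma evs_delta: "evs (delta P K e a) = insert e (evs P)"
  by (simp add: evs_def delta_def)
lemma elems_delta: "e \<notin> evs P \<Longrightarrow> elems (delta P K e a) = insert (e,a) (elems P)"
  unfolding elems_def delta_def evs_def by (auto split: if_splits)

lemma delta_rel:
  assumes P: "is_poset P" and eP: "e \<notin> evs P" and K: "K \<subseteq> elems P"
  shows "snd (delta P K e a) = snd P \<union> {(x,e) | x. x = e \<or> (\<exists>k\<in>fst`K. (x,k) \<in> snd P)}"
proof -
  let ?R = "snd P \<union> {(x, e) | x. x \<in> fst ` K}"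
  let ?T = "snd P \<union> {(x, e) | x. \<exists>k\<in>fst`K. (x,k) \<in> snd P}"
  have sP: "snd P \<subseteq> evs P \<times> evs P" using P by (simp add: is_poset_def)
  have Kev: "\<And>k. k \<in> fst ` K \<Longrightarrow> k \<in> evs P"
  proof -
    fix k assume "k \<in> fst ` K"
    then obtain b where "(k,b) \<in> K" by force
    thus "k \<in> evs P" by (rule elems_evs[OF subsetD[OF K]])
  qed
  have RT: "?R \<subseteq> ?T"
  proof
    fix p assume "p \<in> ?R"
    thus "p \<in> ?T"
    proof
      assume "p \<in> snd P" thus ?thesis by blast
    next
      assume "p \<in> {(x, e) | x. x \<in> fst ` K}"
      then obtain x where x: "p = (x,e)" "x \<in> fst ` K" by blast
      have "(x,x) \<in> snd P" using poset_refl[OF P Kev[OF x(2)]] by (simp add: leq_def)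
      thus ?thesis using x by blast
    qed
  qed
  have noe: "\<And>z. (e,z) \<notin> snd P" using sP eP by blast
  have transT: "trans ?T"
  proof (rule transI)
    fix x y z assume xy: "(x,y) \<in> ?T" and yz: "(y,z) \<in> ?T"
    show "(x,z) \<in> ?T"
    proof (cases "(x,y) \<in> snd P")
      case True
      hence yev: "y \<in> evs P" using sP by blast
      show ?thesis
      proof (cases "(y,z) \<in> snd P")
        case True
        hence "(x,z) \<in> snd P" using \<open>(x,y) \<in> snd P\<close> poset_trans[OF P] by (simp add: leq_def)
        thus ?thesis by blast
      next
        case False
        then obtain k where "z = e" "k \<in> fst ` K" "(y,k) \<in> snd P" using yz by blast
        moreover hence "(x,k) \<in> snd P" using \<open>(x,y) \<in> snd P\<close> poset_trans[OF P] by (simp add: leq_def)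
        ultimately show ?thesis by blast
      qed
    next
      case False
      then obtain k where "y = e" "(x,k) \<in> snd P" "k \<in> fst ` K" using xy by blast
      hence "(e,z) \<in> ?T" using yz by simp
      moreover have "(e,z) \<notin> snd P" by (rule noe)
      moreover have "\<not> (\<exists>k. (e,k) \<in> snd P)" using noe by blast
      ultimately show ?thesis by blast
    qed
  qed
  have "?R\<^sup>+ = ?T"
  proof (rule equalityI)
    show "?R\<^sup>+ \<subseteq> ?T"
    proof
      fix p assume "p \<in> ?R\<^sup>+"
      hence "p \<in> ?T\<^sup>+" using trancl_mono[OF _ RT] by blast
      thus "p \<in> ?T" using trancl_id[OF transT] by simp
    qed
  next
    show "?T \<subseteq> ?R\<^sup>+"
    proof
      fix p assume "p \<in> ?T"
      thus "p \<in> ?R\<^sup>+"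
      proof
        assume "p \<in> snd P" thus ?thesis by (meson UnI1 r_into_trancl')
      next
        assume "p \<in> {(x, e) | x. \<exists>k\<in>fst`K. (x,k) \<in> snd P}"
        then obtain x k where x: "p = (x,e)" "k \<in> fst ` K" "(x,k) \<in> snd P" by blast
        have a1: "(x,k) \<in> ?R" using x(3) by blast
        have a2: "(k,e) \<in> ?R" using x(2) by blast
        have "(x,e) \<in> ?R\<^sup>+" by (rule trancl_trans[OF r_into_trancl[OF a1] r_into_trancl[OF a2]])
        thus ?thesis using x(1) by simp
      qed
    qed
  qed
  thus ?thesis unfolding delta_def by auto
qed

lemma leq_delta:
  assumes P: "is_poset P" and eP: "e \<notin> evs P" and K: "K \<subseteq> elems P"
  shows "leq (delta P K e a) x y \<longleftrightarrow> leq P x y \<or> (y = e \<and> (x = e \<or> (\<exists>k\<in>fst`K. leq P x k)))"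
  unfolding leq_def delta_rel[OF assms] by blast

lemma poset_delta:
  assumes P: "is_poset P" and eP: "e \<notin> evs P" and K: "K \<subseteq> elems P"
  shows "is_poset (delta P K e a)"
proof -
  let ?D = "delta P K e a"
  have sP: "snd P \<subseteq> evs P \<times> evs P" using P by (simp add: is_poset_def)
  have noe: "\<And>z. \<not> leq P e z" using sP eP by (auto simp: leq_def)
  have noe2: "\<And>z. \<not> leq P z e" using sP eP by (auto simp: leq_def)
  have Kev: "\<And>k. k \<in> fst ` K \<Longrightarrow> k \<in> evs P"
  proof -
    fix k assume "k \<in> fst ` K"
    then obtain b where "(k,b) \<in> K" by force
    thus "k \<in> evs P" by (rule elems_evs[OF subsetD[OF K]])
  qed
  note L = leq_delta[OF P eP K, of a]
  have fin: "finite (evs ?D)" using P by (simp add: evs_delta is_poset_def)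
  have sub: "snd ?D \<subseteq> evs ?D \<times> evs ?D"
  proof
    fix p assume p: "p \<in> snd ?D"
    obtain x y where xy: "p = (x,y)" by (cases p)
    have "leq ?D x y" using p xy by (simp add: leq_def)
    hence "leq P x y \<or> (y = e \<and> (x = e \<or> (\<exists>k\<in>fst`K. leq P x k)))" using L by blast
    thus "p \<in> evs ?D \<times> evs ?D" using xy poset_leq_evs[OF P] by (auto simp: evs_delta)
  qed
  have rx: "\<forall>x\<in>evs ?D. (x,x) \<in> snd ?D"
  proof
    fix x assume "x \<in> evs ?D"
    hence "x = e \<or> x \<in> evs P" by (simp add: evs_delta)
    hence "leq ?D x x" using L poset_refl[OF P] by blast
    thus "(x,x) \<in> snd ?D" by (simp add: leq_def)
  qed
  have refl: "refl_on (evs ?D) (snd ?D)"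
    using rx sub by (auto simp: refl_on_def)
  have anti: "antisym (snd ?D)"
  proof (rule antisymI)
    fix x y assume "(x,y) \<in> snd ?D" "(y,x) \<in> snd ?D"
    hence 1: "leq ?D x y" "leq ?D y x" by (auto simp: leq_def)
    show "x = y"
    proof (cases "leq P x y")
      case True
      show ?thesis
      proof (cases "leq P y x")
        case True thus ?thesis using \<open>leq P x y\<close> poset_antisym[OF P] by blast
      next
        case False
        hence "x = e" using 1(2) L by blast
        thus ?thesis using \<open>leq P x y\<close> noe by blast
      qed
    next
      case False
      hence "y = e" using 1(1) L by blast
      hence "leq P y x \<or> x = e" using 1(2) L noe by blast
      thus ?thesis using \<open>y = e\<close> noe by blast
    qed
  qed
  have tr: "trans (snd ?D)"
  proof (rule transI)
    fix x y z assume "(x,y) \<in> snd ?D" "(y,z) \<in> snd ?D"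
    hence 1: "leq ?D x y" "leq ?D y z" by (auto simp: leq_def)
    have "leq ?D x z"
    proof (cases "leq P x y")
      case True
      hence ye: "y \<noteq> e" using noe2 by blast
      show ?thesis
      proof (cases "leq P y z")
        case True thus ?thesis using \<open>leq P x y\<close> poset_trans[OF P] L by blast
      next
        case False
        then obtain k where "z = e" "k \<in> fst`K" "leq P y k" using 1(2) L ye by blast
        moreover hence "leq P x k" using \<open>leq P x y\<close> poset_trans[OF P] by blast
        ultimately show ?thesis using L by blast
      qed
    next
      case False
      hence ye: "y = e" using 1(1) L by blast
      hence "z = e" using 1(2) L noe by blast
      thus ?thesis using 1(1) ye by simp
    qed
    thus "(x,z) \<in> snd ?D" by (simp add: leq_def)
  qed
  show ?thesis using fin sub refl anti tr by (simp add: is_poset_def)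
qed

lemma downset_delta_old:
  assumes P: "is_poset P" and eP: "e \<notin> evs P" and K: "K \<subseteq> elems P" and S: "S \<subseteq> elems P"
  shows "downset (delta P K e a) S = downset P S"
proof (rule set_eqI)
  fix y
  note L = leq_delta[OF P eP K, of a]
  show "y \<in> downset (delta P K e a) S \<longleftrightarrow> y \<in> downset P S"
  proof
    assume "y \<in> downset (delta P K e a) S"
    then obtain s where y: "y \<in> elems (delta P K e a)" "s \<in> S" "leq (delta P K e a) (fst y) (fst s)"
      unfolding downset_mem by blast
    have sev: "fst s \<in> evs P" using elems_evs[of "fst s" "snd s" P] subsetD[OF S y(2)] by simp
    hence "fst s \<noteq> e" using eP by blast
    hence ys: "leq P (fst y) (fst s)" using y(3) L by blast
    hence "fst y \<noteq> e" using poset_leq_evs[OF P ys] eP by blast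
    hence "y \<in> elems P" using y(1) elems_delta[OF eP] by (cases y) auto
    thus "y \<in> downset P S" using y(2) ys unfolding downset_mem by blast
  next
    assume "y \<in> downset P S"
    then obtain s where y: "y \<in> elems P" "s \<in> S" "leq P (fst y) (fst s)"
      unfolding downset_mem by blast
    have "y \<in> elems (delta P K e a)" using y(1) elems_delta[OF eP] by blast
    moreover have "leq (delta P K e a) (fst y) (fst s)" using y(3) L by blast
    ultimately show "y \<in> downset (delta P K e a) S" using y(2) unfolding downset_mem by blast
  qed
qed

lemma downset_delta_new:
  assumes P: "is_poset P" and eP: "e \<notin> evs P" and K: "K \<subseteq> elems P"
  shows "downset (delta P K e a) {(e,a)} = insert (e,a) (downset P K)"
proof (rule set_eqI)
  fix y
  note L = leq_delta[OF P eP K, of a]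
  show "y \<in> downset (delta P K e a) {(e,a)} \<longleftrightarrow> y \<in> insert (e,a) (downset P K)"
  proof
    assume "y \<in> downset (delta P K e a) {(e,a)}"
    hence y: "y \<in> elems (delta P K e a)" "leq (delta P K e a) (fst y) e"
      unfolding downset_mem by auto
    show "y \<in> insert (e,a) (downset P K)"
    proof (cases "fst y = e")
      case True
      moreover have "y \<in> insert (e,a) (elems P)" using y(1) elems_delta[OF eP] by simp
      ultimately have "y = (e,a)" using elems_evs[of e "snd y" P] eP by (cases y) auto
      thus ?thesis by blast
    next
      case False
      hence "y \<in> elems P" using y(1) elems_delta[OF eP] by (cases y) auto
      moreover have "\<not> leq P (fst y) e" using poset_leq_evs[OF P, of "fst y" e] eP by blast
      moreover obtain k where "k \<in> fst ` K" "leq P (fst y) k"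
        using y(2) L False calculation(2) by blast
      moreover then obtain kp where "kp \<in> K" "fst kp = k" by blast
      ultimately have "y \<in> downset P K" unfolding downset_mem by auto
      thus ?thesis by blast
    qed
  next
    assume "y \<in> insert (e,a) (downset P K)"
    thus "y \<in> downset (delta P K e a) {(e,a)}"
    proof
      assume "y = (e,a)"
      moreover have "(e,a) \<in> elems (delta P K e a)" using elems_delta[OF eP] by blast
      moreover have "leq (delta P K e a) e e" using L by blast
      ultimately show ?thesis unfolding downset_mem by auto
    next
      assume "y \<in> downset P K"
      then obtain k where y: "y \<in> elems P" "k \<in> K" "leq P (fst y) (fst k)" unfolding downset_mem by blast
      have "y \<in> elems (delta P K e a)" using y(1) elems_delta[OF eP] by blast
      moreover have "leq (delta P K e a) (fst y) e" using L y(2,3) by blast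
      ultimately show ?thesis unfolding downset_mem by auto
    qed
  qed
qed



lemma emb_delta:
  assumes P: "is_poset P" and Q: "is_poset Q" and em: "order_embedding \<sigma> P Q"
    and eP: "e \<notin> evs P" and eQ: "e' \<notin> evs Q" and K: "K \<subseteq> elems P"
  shows "order_embedding (\<sigma>(e := e')) (delta P K e a) (delta Q (rename \<sigma> K) e' a)"
proof -
  let ?s = "\<sigma>(e := e')"
  let ?DP = "delta P K e a" and ?DQ = "delta Q (rename \<sigma> K) e' a"
  have KQ: "rename \<sigma> K \<subseteq> elems Q" by (rule rename_elems[OF emb_morph[OF em] K])
  note LP = leq_delta[OF P eP K, of a]
  note LQ = leq_delta[OF Q eQ KQ, of a]
  have sev: "\<And>x. x \<in> evs P \<Longrightarrow> \<sigma> x \<in> evs Q" using morph_evs[OF emb_morph[OF em]] .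
  have sne: "\<And>x. x \<in> evs P \<Longrightarrow> \<sigma> x \<noteq> e'" using sev eQ by blast
  have xne: "\<And>x. x \<in> evs P \<Longrightarrow> x \<noteq> e" using eP by blast
  have noP1: "\<And>z. \<not> leq P e z" and noP2: "\<And>z. \<not> leq P z e"
    using poset_leq_evs[OF P] eP by blast+
  have noQ1: "\<And>z. \<not> leq Q e' z" and noQ2: "\<And>z. \<not> leq Q z e'"
    using poset_leq_evs[OF Q] eQ by blast+
  have Kev: "\<And>k. k \<in> fst ` K \<Longrightarrow> k \<in> evs P"
  proof -
    fix k assume "k \<in> fst ` K"
    then obtain b where "(k,b) \<in> K" by force
    thus "k \<in> evs P" by (rule elems_evs[OF subsetD[OF K]])
  qed
  have fKQ: "fst ` rename \<sigma> K = \<sigma> ` fst ` K" by (rule fst_rename)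
  have exK: "\<And>x. x \<in> evs P \<Longrightarrow> (\<exists>k\<in>fst ` rename \<sigma> K. leq Q (\<sigma> x) k) \<longleftrightarrow> (\<exists>k\<in>fst`K. leq P x k)"
  proof -
    fix x assume x: "x \<in> evs P"
    have "(\<exists>k\<in>\<sigma> ` fst ` K. leq Q (\<sigma> x) k) \<longleftrightarrow> (\<exists>k\<in>fst`K. leq Q (\<sigma> x) (\<sigma> k))" by blast
    also have "\<dots> \<longleftrightarrow> (\<exists>k\<in>fst`K. leq P x k)" using emb_leq_iff[OF em x] Kev by blast
    finally show "(\<exists>k\<in>fst ` rename \<sigma> K. leq Q (\<sigma> x) k) \<longleftrightarrow> (\<exists>k\<in>fst`K. leq P x k)" using fKQ by simp
  qed
  have iff: "\<And>x y. x \<in> evs ?DP \<Longrightarrow> y \<in> evs ?DP \<Longrightarrow> leq ?DQ (?s x) (?s y) \<longleftrightarrow> leq ?DP x y"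
  proof -
    fix x y assume x: "x \<in> evs ?DP" and y: "y \<in> evs ?DP"
    have x': "x = e \<or> x \<in> evs P" and y': "y = e \<or> y \<in> evs P" using x y by (auto simp: evs_delta)
    show "leq ?DQ (?s x) (?s y) \<longleftrightarrow> leq ?DP x y"
    proof (cases "y = e")
      case True
      note ye = True
      show ?thesis
      proof (cases "x = e")
        case True thus ?thesis using ye LP LQ by simp
      next
        case False
        hence xe: "x \<in> evs P" using x' by blast
        have "leq ?DQ (?s x) (?s y) \<longleftrightarrow> (\<exists>k\<in>fst ` rename \<sigma> K. leq Q (\<sigma> x) k)"
          using LQ ye False noQ2 sne[OF xe] by simp
        also have "\<dots> \<longleftrightarrow> (\<exists>k\<in>fst`K. leq P x k)" using exK[OF xe] .
        also have "\<dots> \<longleftrightarrow> leq ?DP x y" using LP ye False noP2 by simp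
        finally show ?thesis .
      qed
    next
      case False
      hence ye: "y \<in> evs P" using y' by blast
      show ?thesis
      proof (cases "x = e")
        case True
        have "\<not> leq ?DQ (?s x) (?s y)" using LQ True False noQ1 sne[OF ye] by simp
        moreover have "\<not> leq ?DP x y" using LP True False noP1 by simp
        ultimately show ?thesis by blast
      next
        case xne: False
        hence xe: "x \<in> evs P" using x' by blast
        have "leq ?DQ (?s x) (?s y) \<longleftrightarrow> leq Q (\<sigma> x) (\<sigma> y)" using LQ xne False sne[OF ye] by simp
        also have "\<dots> \<longleftrightarrow> leq P x y" using emb_leq_iff[OF em xe ye] .
        also have "\<dots> \<longleftrightarrow> leq ?DP x y" using LP False by simp
        finally show ?thesis .
      qed
    qed
  qed
  have m1: "\<forall>x\<in>evs ?DP. ?s x \<in> evs ?DQ \<and> fst ?DQ (?s x) = fst ?DP x"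
  proof
    fix x assume "x \<in> evs ?DP"
    hence "x = e \<or> x \<in> evs P" by (simp add: evs_delta)
    thus "?s x \<in> evs ?DQ \<and> fst ?DQ (?s x) = fst ?DP x"
    proof
      assume "x = e" thus ?thesis by (simp add: evs_delta fst_delta)
    next
      assume xe: "x \<in> evs P"
      have "fst Q (\<sigma> x) = fst P x" by (rule morph_lab[OF emb_morph[OF em] xe])
      thus ?thesis using xe xne[OF xe] sne[OF xe] sev[OF xe] by (simp add: evs_delta fst_delta)
    qed
  qed
  show ?thesis unfolding order_embedding_def morphism_def using m1 iff by blast
qed

lemma core_map:
  assumes P: "is_poset P" and Q: "is_poset Q" and em: "order_embedding \<sigma> P Q"
    and eP: "e \<notin> evs P" and eQ: "e' \<notin> evs Q" and c: "tokwf P c" and c': "tokwf P c'"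
  shows "maxel Q (causes (gm \<sigma> Q ` c)) = rename \<sigma> (maxel P (causes c))"
    and "gm (\<sigma>(e := e')) (delta Q (rename \<sigma> (maxel P (causes c))) e' a) `
           ((\<lambda>s. (insert (e,a) (causes c), s)) ` A \<union> c')
         = (\<lambda>s. (insert (e',a) (causes (gm \<sigma> Q ` c)), s)) ` A \<union> gm \<sigma> Q ` c'"
proof -
  let ?s = "\<sigma>(e := e')"
  define Cc where "Cc = causes c"
  define K where "K = maxel P Cc"
  have Cc: "Cc \<subseteq> elems P" using tokwf_causes[OF c] Cc_def by simp
  have K: "K \<subseteq> elems P" using maxel_sub[of P Cc] Cc K_def by blast
  have KC: "K \<subseteq> Cc" using maxel_sub[of P Cc] K_def by blast
  have KQ: "rename \<sigma> K \<subseteq> elems Q" by (rule rename_elems[OF emb_morph[OF em] K])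
  have CQ: "rename \<sigma> Cc \<subseteq> elems Q" by (rule rename_elems[OF emb_morph[OF em] Cc])
  have agree: "\<forall>x\<in>evs P. ?s x = \<sigma> x" using eP by auto
  have causesQ: "causes (gm \<sigma> Q ` c) = downset Q (rename \<sigma> Cc)" using causes_gm Cc_def by simp
  show "maxel Q (causes (gm \<sigma> Q ` c)) = rename \<sigma> (maxel P (causes c))"
    using causesQ maxel_downset[OF Q CQ] maxel_rename[OF P Q em Cc] Cc_def by simp
  let ?DQ = "delta Q (rename \<sigma> K) e' a"
  have old: "gm ?s ?DQ ` c' = gm \<sigma> Q ` c'"
  proof (rule image_cong[OF refl])
    fix k assume "k \<in> c'"
    obtain K1 s where k: "k = (K1,s)" by (cases k)
    have K1: "K1 \<subseteq> elems P" using tokwfD[OF c'] \<open>k \<in> c'\<close> k by blast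
    have "rename ?s K1 = rename \<sigma> K1" by (rule rename_cong[OF agree K1])
    moreover have "downset ?DQ (rename \<sigma> K1) = downset Q (rename \<sigma> K1)"
      by (rule downset_delta_old[OF Q eQ KQ rename_elems[OF emb_morph[OF em] K1]])
    ultimately show "gm ?s ?DQ k = gm \<sigma> Q k" using k by simp
  qed
  have new: "gm ?s ?DQ (insert (e,a) Cc, s) = (insert (e',a) (downset Q (rename \<sigma> Cc)), s)" for s
  proof -
    have "rename ?s (insert (e,a) Cc) = insert (e',a) (rename \<sigma> Cc)"
      using rename_insert[of ?s e a Cc] rename_cong[OF agree Cc] by simp
    hence "downset ?DQ (rename ?s (insert (e,a) Cc)) = downset ?DQ {(e',a)} \<union> downset ?DQ (rename \<sigma> Cc)"
      using downset_Un[of ?DQ "{(e',a)}" "rename \<sigma> Cc"] by simp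
    also have "\<dots> = insert (e',a) (downset Q (rename \<sigma> K)) \<union> downset Q (rename \<sigma> Cc)"
      using downset_delta_new[OF Q eQ KQ, of a] downset_delta_old[OF Q eQ KQ CQ, of a] by simp
    also have "\<dots> = insert (e',a) (downset Q (rename \<sigma> Cc))"
      using downset_mono[OF rename_mono[OF KC], of Q \<sigma>] by blast
    finally show ?thesis by simp
  qed
  have "gm ?s ?DQ ` ((\<lambda>s. (insert (e,a) Cc, s)) ` A) = (\<lambda>s. (insert (e',a) (downset Q (rename \<sigma> Cc)), s)) ` A"
    unfolding image_image using new by simp
  thus "gm ?s (delta Q (rename \<sigma> (maxel P (causes c))) e' a) ` ((\<lambda>s. (insert (e,a) (causes c), s)) ` A \<union> c')
         = (\<lambda>s. (insert (e',a) (causes (gm \<sigma> Q ` c)), s)) ` A \<union> gm \<sigma> Q ` c'"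
    using old causesQ unfolding image_Un K_def Cc_def by simp
qed

lemma tokwf_result:
  assumes P: "is_poset P" and eP: "e \<notin> evs P" and c: "tokwf P c" and c': "tokwf P c'"
  shows "tokwf (delta P (maxel P (causes c)) e a) ((\<lambda>s. (insert (e,a) (causes c), s)) ` A \<union> c')"
proof -
  have em: "order_embedding (\<lambda>x. x) P P" by (simp add: order_embedding_def morphism_def)
  have id: "(\<lambda>x. x)(e := e) = (\<lambda>x. x)" by auto
  have K: "maxel P (causes c) \<subseteq> elems P" using maxel_sub tokwf_causes[OF c] by blast
  have "gm (\<lambda>x. x) (delta P (maxel P (causes c)) e a) ` ((\<lambda>s. (insert (e,a) (causes c), s)) ` A \<union> c')
        = (\<lambda>s. (insert (e,a) (causes c), s)) ` A \<union> c'"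
    using core_map(2)[OF P P em eP eP c c', of a A] gm_id[OF P c] gm_id[OF P c'] id rename_id[of "maxel P (causes c)"]
    by simp
  moreover have "is_poset (delta P (maxel P (causes c)) e a)" by (rule poset_delta[OF P eP K])
  ultimately show ?thesis using tokwf_gm by metis
qed



lemma cgcE:
  assumes "cgc N P d K e a T d1"
  obtains t c c' where "t \<in> transitions N" "d = c \<union> c'" "pmarking N P (c \<union> c')"
    "marking_places c = preset N t" "a = lab N t" "e \<notin> evs P"
    "K = maxel P (causes c)" "T = delta P K e a"
    "d1 = ((\<lambda>s. (insert (e, a) (causes c), s)) ` postset N t) \<union> c'"
  using assms unfolding cgc_def by blast

lemma cgcI:
  assumes "t \<in> transitions N" "d = c \<union> c'" "pmarking N P (c \<union> c')"
    "marking_places c = preset N t" "a = lab N t" "e \<notin> evs P"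
    "K = maxel P (causes c)" "T = delta P K e a"
    "d1 = ((\<lambda>s. (insert (e, a) (causes c), s)) ` postset N t) \<union> c'"
  shows "cgc N P d K e a T d1"
  using assms unfolding cgc_def by blast

lemma cgc_basic:
  assumes "cgc N P d K e a T d1"
  shows "K \<subseteq> elems P" "T = delta P K e a" "e \<notin> evs P" "is_poset P" "pmarking N P d"
    "is_poset T" "tokwf T d1"
proof -
  obtain t c c' where H: "t \<in> transitions N" "d = c \<union> c'" "pmarking N P (c \<union> c')"
    "marking_places c = preset N t" "a = lab N t" "e \<notin> evs P"
    "K = maxel P (causes c)" "T = delta P K e a"
    "d1 = ((\<lambda>s. (insert (e, a) (causes c), s)) ` postset N t) \<union> c'" by (rule cgcE[OF assms])
  have P: "is_poset P" using H(3) by (simp add: pmarking_def)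
  have tw: "tokwf P c" "tokwf P c'" using pmarking_tokwf[OF H(3)] tokwf_Un[of P c c'] by simp_all
  show K: "K \<subseteq> elems P" using H(7) maxel_sub tokwf_causes[OF tw(1)] by blast
  show "T = delta P K e a" "e \<notin> evs P" "is_poset P" "pmarking N P d" using H P by auto
  show "is_poset T" using poset_delta[OF P H(6) K] H(8) by simp
  show "tokwf T d1" using tokwf_result[OF P H(6) tw, of a "postset N t"] H(7-9) by simp
qed

lemma cgc_pmarking:
  assumes net: "is_net N" and st: "cgc N P d K e a T d1" and fin: "finite d1"
  shows "pmarking N T d1"
proof -
  obtain t c c' where H: "t \<in> transitions N" "d = c \<union> c'" "pmarking N P (c \<union> c')"
    "marking_places c = preset N t" "a = lab N t" "e \<notin> evs P"
    "K = maxel P (causes c)" "T = delta P K e a"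
    "d1 = ((\<lambda>s. (insert (e, a) (causes c), s)) ` postset N t) \<union> c'" by (rule cgcE[OF st])
  have T: "is_poset T" and tw: "tokwf T d1" using cgc_basic[OF st] by auto
  have post: "postset N t \<subseteq> places N" using net H(1) unfolding is_net_def postset_def by blast
  have cm: "causal_marking N (c \<union> c')" using H(3) by (simp add: pmarking_def)
  have "\<forall>(K1, s)\<in>d1. s \<in> places N \<and> finite K1"
  proof (intro ballI)
    fix k assume k: "k \<in> d1"
    obtain K1 s where ks: "k = (K1,s)" by (cases k)
    have "K1 \<subseteq> elems T" using tokwfD[OF tw] k ks by blast
    hence fK: "finite K1" using finite_elems[OF T] finite_subset by blast
    have "s \<in> places N"
    proof (cases "k \<in> c'")
      case True thus ?thesis using cm ks unfolding causal_marking_def by blast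
    next
      case False
      hence "s \<in> postset N t" using k ks H(9) by auto
      thus ?thesis using post by blast
    qed
    thus "case k of (K1, s) \<Rightarrow> s \<in> places N \<and> finite K1" using fK ks by simp
  qed
  hence "causal_marking N d1" using fin unfolding causal_marking_def by blast
  thus ?thesis using T tw unfolding pmarking_def tokwf_def by blast
qed

lemma cgc_map:
  assumes P: "is_poset P" and Q: "is_poset Q" and em: "order_embedding \<sigma> P Q"
    and eQ: "e' \<notin> evs Q" and st: "cgc N P d K e a T d1"
  shows "cgc N Q (gm \<sigma> Q ` d) (rename \<sigma> K) e' a (delta Q (rename \<sigma> K) e' a)
           (gm (\<sigma>(e := e')) (delta Q (rename \<sigma> K) e' a) ` d1)"
    and "order_embedding (\<sigma>(e := e')) T (delta Q (rename \<sigma> K) e' a)"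
proof -
  obtain t c c' where H: "t \<in> transitions N" "d = c \<union> c'" "pmarking N P (c \<union> c')"
    "marking_places c = preset N t" "a = lab N t" "e \<notin> evs P"
    "K = maxel P (causes c)" "T = delta P K e a"
    "d1 = ((\<lambda>s. (insert (e, a) (causes c), s)) ` postset N t) \<union> c'" by (rule cgcE[OF st])
  have tw: "tokwf P c" "tokwf P c'" using pmarking_tokwf[OF H(3)] tokwf_Un[of P c c'] by simp_all
  have K: "K \<subseteq> elems P" using cgc_basic[OF st] by simp
  note cm = core_map(1)[OF P Q em H(6) eQ tw] core_map(2)[OF P Q em H(6) eQ tw, where a=a and A="postset N t"]
  show "cgc N Q (gm \<sigma> Q ` d) (rename \<sigma> K) e' a (delta Q (rename \<sigma> K) e' a)
           (gm (\<sigma>(e := e')) (delta Q (rename \<sigma> K) e' a) ` d1)"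
  proof (rule cgcI[where t=t and c="gm \<sigma> Q ` c" and c'="gm \<sigma> Q ` c'"])
    show "t \<in> transitions N" by (rule H(1))
    show "gm \<sigma> Q ` d = gm \<sigma> Q ` c \<union> gm \<sigma> Q ` c'" using H(2) by (simp add: image_Un)
    show "pmarking N Q (gm \<sigma> Q ` c \<union> gm \<sigma> Q ` c')" using pmarking_gm[OF H(3) Q, of \<sigma>] by (simp add: image_Un)
    show "marking_places (gm \<sigma> Q ` c) = preset N t" using H(4) places_gm by metis
    show "a = lab N t" by (rule H(5))
    show "e' \<notin> evs Q" by (rule eQ)
    show "rename \<sigma> K = maxel Q (causes (gm \<sigma> Q ` c))" using cm(1) H(7) by simp
    show "delta Q (rename \<sigma> K) e' a = delta Q (rename \<sigma> K) e' a" ..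
    show "gm (\<sigma>(e := e')) (delta Q (rename \<sigma> K) e' a) ` d1 =
      (\<lambda>s. (insert (e', a) (causes (gm \<sigma> Q ` c)), s)) ` postset N t \<union> gm \<sigma> Q ` c'"
      using cm(2) H(7,9) by simp
  qed
  show "order_embedding (\<sigma>(e := e')) T (delta Q (rename \<sigma> K) e' a)"
    using emb_delta[OF P Q em H(6) eQ K] H(8) by simp
qed

lemma cgc_pull:
  assumes P: "is_poset P" and Q: "is_poset Q" and em: "order_embedding \<sigma> P Q"
    and pm: "pmarking N P d" and eP: "e \<notin> evs P"
    and st: "cgc N Q (gm \<sigma> Q ` d) KQ e' a TQ dQ1"
  shows "\<exists>K d1. KQ = rename \<sigma> K \<and> cgc N P d K e a (delta P K e a) d1
           \<and> dQ1 = gm (\<sigma>(e := e')) (delta Q KQ e' a) ` d1"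
proof -
  obtain t cQ cQ' where H: "t \<in> transitions N" "gm \<sigma> Q ` d = cQ \<union> cQ'" "pmarking N Q (cQ \<union> cQ')"
    "marking_places cQ = preset N t" "a = lab N t" "e' \<notin> evs Q"
    "KQ = maxel Q (causes cQ)" "TQ = delta Q KQ e' a"
    "dQ1 = ((\<lambda>s. (insert (e', a) (causes cQ), s)) ` postset N t) \<union> cQ'" by (rule cgcE[OF st])
  define c where "c = {k \<in> d. gm \<sigma> Q k \<in> cQ}"
  define c' where "c' = {k \<in> d. gm \<sigma> Q k \<in> cQ'}"
  have dc: "d = c \<union> c'"
  proof (rule equalityI)
    show "d \<subseteq> c \<union> c'"
    proof
      fix k assume k: "k \<in> d"
      hence "gm \<sigma> Q k \<in> cQ \<union> cQ'" using H(2) by (metis imageI)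
      thus "k \<in> c \<union> c'" using k unfolding c_def c'_def by blast
    qed
    show "c \<union> c' \<subseteq> d" unfolding c_def c'_def by blast
  qed
  have gc: "gm \<sigma> Q ` c = cQ"
  proof (rule equalityI)
    show "gm \<sigma> Q ` c \<subseteq> cQ" unfolding c_def by blast
    show "cQ \<subseteq> gm \<sigma> Q ` c"
    proof
      fix y assume y: "y \<in> cQ"
      hence "y \<in> gm \<sigma> Q ` d" using H(2) by blast
      then obtain k where "k \<in> d" "y = gm \<sigma> Q k" by blast
      thus "y \<in> gm \<sigma> Q ` c" using y unfolding c_def by blast
    qed
  qed
  have gc': "gm \<sigma> Q ` c' = cQ'"
  proof (rule equalityI)
    show "gm \<sigma> Q ` c' \<subseteq> cQ'" unfolding c'_def by blast
    show "cQ' \<subseteq> gm \<sigma> Q ` c'"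
    proof
      fix y assume y: "y \<in> cQ'"
      hence "y \<in> gm \<sigma> Q ` d" using H(2) by blast
      then obtain k where "k \<in> d" "y = gm \<sigma> Q k" by blast
      thus "y \<in> gm \<sigma> Q ` c'" using y unfolding c'_def by blast
    qed
  qed
  have "tokwf P (c \<union> c')" using pmarking_tokwf[OF pm] dc by simp
  hence tw: "tokwf P c" "tokwf P c'" using tokwf_Un[of P c c'] by simp_all
  define K where "K = maxel P (causes c)"
  define d1 where "d1 = ((\<lambda>s. (insert (e, a) (causes c), s)) ` postset N t) \<union> c'"
  note cm = core_map(1)[OF P Q em eP H(6) tw] core_map(2)[OF P Q em eP H(6) tw, where a=a and A="postset N t"]
  have KQ: "KQ = rename \<sigma> K" using cm(1) H(7) gc K_def by simp
  have st': "cgc N P d K e a (delta P K e a) d1"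
  proof (rule cgcI[where t=t and c=c and c'=c'])
    show "t \<in> transitions N" "d = c \<union> c'" "pmarking N P (c \<union> c')" using H(1) dc pm by auto
    show "marking_places c = preset N t" using H(4) places_gm gc by metis
    show "a = lab N t" "e \<notin> evs P" "K = maxel P (causes c)" "delta P K e a = delta P K e a"
      "d1 = (\<lambda>s. (insert (e, a) (causes c), s)) ` postset N t \<union> c'"
      using H(5) eP K_def d1_def by auto
  qed
  have "dQ1 = gm (\<sigma>(e := e')) (delta Q KQ e' a) ` d1"
    using cm(2) H(9) gc gc' KQ K_def d1_def by simp
  thus ?thesis using KQ st' by blast
qed

lemma rename_m_comp: "rename_m f (rename_m g d) = rename_m (f \<circ> g) d"
  unfolding rename_m_def image_image by (auto simp: split_def rename_comp)
lemma rename_m_cong: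
  assumes "\<forall>x\<in>evs P. f x = g x" "tokwf P d"
  shows "rename_m f d = rename_m g d"
  unfolding rename_m_def
proof (rule image_cong[OF refl])
  fix k assume "k \<in> d"
  obtain K s where k: "k = (K,s)" by (cases k)
  have K: "K \<subseteq> elems P" using tokwfD[OF assms(2)] \<open>k \<in> d\<close> k by blast
  show "(case k of (K, s) \<Rightarrow> (rename f K, s)) = (case k of (K, s) \<Rightarrow> (rename g K, s))"
    using rename_cong[OF assms(1) K] k by simp
qed
lemma rename_m_id: "rename_m (\<lambda>x. x) d = d"
  unfolding rename_m_def by (simp add: rename_id split_def)

lemma surj_delta:
  assumes s: "\<forall>y\<in>evs Q. \<exists>x\<in>evs P. \<sigma> x = y" and eP: "e \<notin> evs P"
  shows "\<forall>y\<in>evs (delta Q KQ e' a). \<exists>x\<in>evs (delta P K e a). (\<sigma>(e := e')) x = y"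
proof
  fix y assume "y \<in> evs (delta Q KQ e' a)"
  hence "y = e' \<or> y \<in> evs Q" by (simp add: evs_delta)
  thus "\<exists>x\<in>evs (delta P K e a). (\<sigma>(e := e')) x = y"
  proof
    assume "y = e'" thus ?thesis by (auto simp: evs_delta)
  next
    assume "y \<in> evs Q"
    then obtain x where "x \<in> evs P" "\<sigma> x = y" using s by blast
    moreover hence "x \<noteq> e" using eP by blast
    ultimately show ?thesis by (auto simp: evs_delta)
  qed
qed

lemma fresh_notin:
  assumes "infinite (UNIV :: 'e set)" "is_poset (P :: ('e,'a) poset)"
  shows "fresh P \<notin> evs P"
proof -
  have "finite (evs P)" using assms(2) by (simp add: is_poset_def)
  then obtain x where "x \<notin> evs P" using ex_new_if_finite[OF assms(1)] by blast
  thus ?thesis unfolding fresh_def by (rule someI)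
qed

lemma finite_gm_inv:
  assumes "is_poset P" "is_poset R" "order_embedding \<tau> P R" "tokwf P d" "finite (gm \<tau> R ` d)"
  shows "finite d"
  using finite_imageD[OF assms(5) gm_inj_on[OF assms(1-4)]] .



lemma vc_iso: "valid_canon canon alpha \<Longrightarrow> is_poset X \<Longrightarrow> poset_iso (alpha X) X (canon X)"
  unfolding valid_canon_def by blast
lemma vc_poset: "valid_canon canon alpha \<Longrightarrow> is_poset X \<Longrightarrow> is_poset (canon X)"
  unfolding valid_canon_def by blast
lemma vc_abstract:
  assumes vc: "valid_canon canon alpha" and X: "is_poset X"
  shows "abstract canon (canon X)"
proof -
  have A: "is_poset X \<longrightarrow> is_poset (canon X) \<and> poset_iso (alpha X) X (canon X)
        \<and> (\<forall>Q. is_poset Q \<and> isomorphic X Q \<longrightarrow> canon Q = canon X)"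
    using vc unfolding valid_canon_def by (rule spec)
  have B: "is_poset (canon X)" and C: "poset_iso (alpha X) X (canon X)"
    and D: "\<forall>Q. is_poset Q \<and> isomorphic X Q \<longrightarrow> canon Q = canon X" using mp[OF A X] by blast+
  have I: "isomorphic X (canon X)" unfolding isomorphic_def using C by blast
  have "canon (canon X) = canon X" using mp[OF spec[where x="canon X", OF D]] B I by blast
  thus ?thesis using B unfolding abstract_def by simp
qed

lemma abstract_poset: "abstract canon P \<Longrightarrow> is_poset P"
  unfolding abstract_def by blast

lemma iso_surj_all: "poset_iso \<beta> P Q \<Longrightarrow> \<forall>y\<in>evs Q. \<exists>x\<in>evs P. \<beta> x = y"
  using iso_surj[of \<beta> P Q] by blast

lemma cgac_char:
  assumes vc: "valid_canon canon alpha" and inf: "infinite (UNIV :: 'e set)"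
    and ab: "abstract canon (P :: ('e,'a) poset)"
  shows "cgac N canon alpha P d K a T d'' \<longleftrightarrow>
    (\<exists>d1. cgc N P d K (fresh P) a (delta P K (fresh P) a) d1 \<and> T = canon (delta P K (fresh P) a)
        \<and> d'' = rename_m (alpha (delta P K (fresh P) a)) d1)"
proof
  have P: "is_poset P" using ab by (rule abstract_poset)
  have cP: "canon P = P" using ab unfolding abstract_def by blast
  have fP: "fresh P \<notin> evs P" using fresh_notin[OF inf P] .
  assume "cgac N canon alpha P d K a T d''"
  then obtain P0 d0 K0 e P1 d1 where st: "cgc N P0 d0 K0 e a P1 d1"
    and h: "P = canon P0" "d = rename_m (alpha P0) d0" "K = rename (alpha P0) K0"
      "T = deltaA canon P K a"
      "d'' = rename_m (\<lambda>x. if x = e then newA alpha P K a else oldA alpha P K a (alpha P0 x)) d1"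
    unfolding cgac_def by blast
  note b = cgc_basic[OF st]
  let ?b = "alpha P0"
  have iso: "poset_iso ?b P0 P" using vc_iso[OF vc b(4)] h(1) by simp
  have em: "order_embedding ?b P0 P" using iso_emb[OF iso] .
  have tw0: "tokwf P0 d0" using pmarking_tokwf[OF b(5)] .
  note m = cgc_map[OF b(4) P em fP st]
  define DD where "DD = delta P (rename ?b K0) (fresh P) a"
  have gd: "gm ?b P ` d0 = rename_m ?b d0" using gm_surj[OF b(4) P em iso_surj_all[OF iso] tw0] .
  have DD: "delta P K (fresh P) a = DD" using h(3) DD_def by simp
  have st': "cgc N P d K (fresh P) a (delta P K (fresh P) a) (gm (?b(e := fresh P)) DD ` d1)"
    using m(1) gd h(2,3) DD_def by simp
  have emb': "order_embedding (?b(e := fresh P)) P1 DD" using m(2) DD_def by simp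
  have P1: "is_poset P1" using b(6) .
  have DDp: "is_poset DD" using poset_delta[OF P fP rename_elems[OF emb_morph[OF em] b(1)]] DD_def by simp
  have sj: "\<forall>y\<in>evs DD. \<exists>x\<in>evs P1. (?b(e := fresh P)) x = y"
    using surj_delta[OF iso_surj_all[OF iso] b(3)] b(2) DD_def by simp
  have g1: "gm (?b(e := fresh P)) DD ` d1 = rename_m (?b(e := fresh P)) d1"
    using gm_surj[OF P1 DDp emb' sj b(7)] .
  have "d'' = rename_m (alpha DD \<circ> (?b(e := fresh P))) d1"
  proof -
    have "\<forall>x\<in>evs P1. (if x = e then newA alpha P K a else oldA alpha P K a (alpha P0 x)) = (alpha DD \<circ> (?b(e := fresh P))) x"
    proof
      fix x assume "x \<in> evs P1"
      show "(if x = e then newA alpha P K a else oldA alpha P K a (alpha P0 x)) = (alpha DD \<circ> (?b(e := fresh P))) x"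
        using DD by (simp add: newA_def oldA_def)
    qed
    note X = rename_m_cong[OF this b(7)]
    show ?thesis unfolding h(5) by (rule X)
  qed
  also have "\<dots> = rename_m (alpha DD) (rename_m (?b(e := fresh P)) d1)" by (rule rename_m_comp[symmetric])
  finally have "d'' = rename_m (alpha DD) (gm (?b(e := fresh P)) DD ` d1)" using g1 by simp
  moreover have "T = canon DD" using h(4) DD by (simp add: deltaA_def)
  ultimately show "\<exists>d1. cgc N P d K (fresh P) a (delta P K (fresh P) a) d1 \<and> T = canon (delta P K (fresh P) a)
        \<and> d'' = rename_m (alpha (delta P K (fresh P) a)) d1" using st' DD by auto
next
  have P: "is_poset P" using ab by (rule abstract_poset)
  have cP: "canon P = P" using ab unfolding abstract_def by blast
  have fP: "fresh P \<notin> evs P" using fresh_notin[OF inf P] .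
  assume "\<exists>d1. cgc N P d K (fresh P) a (delta P K (fresh P) a) d1 \<and> T = canon (delta P K (fresh P) a)
        \<and> d'' = rename_m (alpha (delta P K (fresh P) a)) d1"
  then obtain d1 where st: "cgc N P d K (fresh P) a (delta P K (fresh P) a) d1"
    and hT: "T = canon (delta P K (fresh P) a)" and hd: "d'' = rename_m (alpha (delta P K (fresh P) a)) d1"
    by blast
  note b = cgc_basic[OF st]
  define D where "D = delta P K (fresh P) a"
  let ?b = "alpha P"
  have isoB: "poset_iso ?b P P" using vc_iso[OF vc P] cP by simp
  obtain \<gamma> where isoG: "poset_iso \<gamma> P P" and inv1: "\<forall>x\<in>evs P. \<gamma> (?b x) = x"
    and inv2: "\<forall>y\<in>evs P. ?b (\<gamma> y) = y" using iso_inv[OF isoB] by blast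
  have emG: "order_embedding \<gamma> P P" using iso_emb[OF isoG] .
  note m = cgc_map[OF P P emG fP st]
  let ?g = "\<gamma>(fresh P := fresh P)"
  define P1 where "P1 = delta P (rename \<gamma> K) (fresh P) a"
  have tw: "tokwf P d" using pmarking_tokwf[OF b(5)] .
  have gd: "gm \<gamma> P ` d = rename_m \<gamma> d" using gm_surj[OF P P emG iso_surj_all[OF isoG] tw] .
  have dd: "d = rename_m ?b (rename_m \<gamma> d)"
  proof -
    have "rename_m ?b (rename_m \<gamma> d) = rename_m (?b \<circ> \<gamma>) d" by (rule rename_m_comp)
    also have "\<dots> = rename_m (\<lambda>x. x) d" by (rule rename_m_cong[OF _ tw]) (simp add: inv2)
    finally show ?thesis by (simp add: rename_m_id)
  qed
  have KK: "K = rename ?b (rename \<gamma> K)"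
  proof -
    have "rename ?b (rename \<gamma> K) = rename (?b \<circ> \<gamma>) K" by (rule rename_comp)
    also have "\<dots> = rename (\<lambda>x. x) K" by (rule rename_cong[OF _ b(1)]) (simp add: inv2)
    finally show ?thesis by (simp add: rename_id)
  qed
  have Dp: "is_poset D" using b(6) D_def by simp
  have P1p: "is_poset P1" using poset_delta[OF P fP rename_elems[OF emb_morph[OF emG] b(1)]] P1_def by simp
  have emb': "order_embedding ?g D P1" using m(2) D_def P1_def by simp
  have sj: "\<forall>y\<in>evs P1. \<exists>x\<in>evs D. ?g x = y"
    using surj_delta[OF iso_surj_all[OF isoG] fP] P1_def D_def by simp
  have tw1: "tokwf D d1" using b(7) D_def by simp
  have g1: "gm ?g P1 ` d1 = rename_m ?g d1" using gm_surj[OF Dp P1p emb' sj tw1] .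
  let ?f = "\<lambda>x. if x = fresh P then newA alpha P K a else oldA alpha P K a (?b x)"
  have "rename_m ?f (gm ?g P1 ` d1) = rename_m (?f \<circ> ?g) d1" unfolding g1 by (rule rename_m_comp)
  also have "\<dots> = rename_m (alpha D) d1"
  proof (rule rename_m_cong[OF _ tw1])
    show "\<forall>x\<in>evs D. (?f \<circ> ?g) x = alpha D x"
    proof
      fix x assume "x \<in> evs D"
      hence "x = fresh P \<or> x \<in> evs P" using D_def by (simp add: evs_delta)
      thus "(?f \<circ> ?g) x = alpha D x"
      proof
        assume "x = fresh P" thus ?thesis by (simp add: newA_def D_def)
      next
        assume x: "x \<in> evs P"
        hence xn: "x \<noteq> fresh P" using fP by blast
        have "\<gamma> x \<in> evs P" using morph_evs[OF emb_morph[OF emG] x] .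
        hence "\<gamma> x \<noteq> fresh P" using fP by auto
        thus ?thesis using xn inv2 x by (simp add: oldA_def D_def)
      qed
    qed
  qed
  finally have hd': "d'' = rename_m ?f (gm ?g P1 ` d1)" using hd D_def by simp
  have st'': "cgc N P (gm \<gamma> P ` d) (rename \<gamma> K) (fresh P) a P1 (gm ?g P1 ` d1)"
    using m(1) P1_def by simp
  have W: "cgc N P (gm \<gamma> P ` d) (rename \<gamma> K) (fresh P) a P1 (gm ?g P1 ` d1) \<and> P = canon P
    \<and> d = rename_m (alpha P) (gm \<gamma> P ` d) \<and> K = rename (alpha P) (rename \<gamma> K)
    \<and> T = deltaA canon P K a \<and> d'' = rename_m ?f (gm ?g P1 ` d1)"
    using st'' cP dd gd KK hT hd' by (simp add: deltaA_def)
  show "cgac N canon alpha P d K a T d''"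
    unfolding cgac_def
    by (rule exI[of _ P], rule exI[of _ "gm \<gamma> P ` d"], rule exI[of _ "rename \<gamma> K"],
        rule exI[of _ "fresh P"], rule exI[of _ P1], rule exI[of _ "gm ?g P1 ` d1"], rule W)
qed

lemma sim_pm:
  "sim_AC N canon alpha P c1 c2 \<Longrightarrow> abstract canon P \<and> pmarking N P c1 \<and> pmarking N P c2"
  unfolding sim_AC_def abs_causal_bisim_def by blast
lemma sim_step:
  "sim_AC N canon alpha P c1 c2 \<Longrightarrow> cgac N canon alpha P c1 K a T c1' \<Longrightarrow>
   \<exists>c2'. cgac N canon alpha P c2 K a T c2' \<and> sim_AC N canon alpha T c1' c2'"
  unfolding sim_AC_def abs_causal_bisim_def by blast
lemma sim_coind:
  "abs_causal_bisim N canon alpha R \<Longrightarrow> R P c1 c2 \<Longrightarrow> sim_AC N canon alpha P c1 c2"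
  unfolding sim_AC_def by blast
lemma sim_sym:
  assumes "sim_AC N canon alpha P c1 c2" shows "sim_AC N canon alpha P c2 c1"
proof -
  obtain R where R: "abs_causal_bisim N canon alpha R" "R P c1 c2" using assms unfolding sim_AC_def by blast
  have "abs_causal_bisim N canon alpha (\<lambda>P x y. R P y x)"
    using R(1) unfolding abs_causal_bisim_def by blast
  thus ?thesis using R(2) unfolding sim_AC_def by blast
qed

lemma transport:
  assumes vc: "valid_canon canon alpha" and DP: "is_poset DP" and DQ: "is_poset DQ"
    and em: "order_embedding \<sigma> DP DQ"
  obtains \<tau> where "order_embedding \<tau> (canon DP) (canon DQ)"
    and "\<And>d. tokwf DP d \<Longrightarrow> gm \<tau> (canon DQ) ` (rename_m (alpha DP) d) = rename_m (alpha DQ) (gm \<sigma> DQ ` d)"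
proof -
  let ?aP = "alpha DP" and ?aQ = "alpha DQ"
  have isoP: "poset_iso ?aP DP (canon DP)" using vc_iso[OF vc DP] .
  have isoQ: "poset_iso ?aQ DQ (canon DQ)" using vc_iso[OF vc DQ] .
  have CP: "is_poset (canon DP)" using vc_poset[OF vc DP] .
  have CQ: "is_poset (canon DQ)" using vc_poset[OF vc DQ] .
  obtain \<gamma> where isoG: "poset_iso \<gamma> (canon DP) DP" and inv1: "\<forall>x\<in>evs DP. \<gamma> (?aP x) = x"
    using iso_inv[OF isoP] by blast
  define \<tau> where "\<tau> = ?aQ \<circ> (\<sigma> \<circ> \<gamma>)"
  have et: "order_embedding \<tau> (canon DP) (canon DQ)"
    unfolding \<tau>_def by (rule emb_comp[OF emb_comp[OF iso_emb[OF isoG] em] iso_emb[OF isoQ]])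
  have eq: "gm \<tau> (canon DQ) ` (rename_m ?aP d) = rename_m ?aQ (gm \<sigma> DQ ` d)" if tw: "tokwf DP d" for d
  proof -
    have "rename_m ?aP d = gm ?aP (canon DP) ` d"
      using gm_surj[OF DP CP iso_emb[OF isoP] iso_surj_all[OF isoP] tw] by simp
    hence "gm \<tau> (canon DQ) ` (rename_m ?aP d) = gm (\<tau> \<circ> ?aP) (canon DQ) ` d"
      using gm_comp[OF CP CQ emb_morph[OF et] emb_morph[OF iso_emb[OF isoP]] tw] by simp
    also have "\<dots> = gm (?aQ \<circ> \<sigma>) (canon DQ) ` d"
      by (rule gm_cong[OF _ tw]) (simp add: \<tau>_def inv1)
    also have "\<dots> = gm ?aQ (canon DQ) ` (gm \<sigma> DQ ` d)"
      using gm_comp[OF DQ CQ emb_morph[OF iso_emb[OF isoQ]] emb_morph[OF em] tw] by simp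
    also have "\<dots> = rename_m ?aQ (gm \<sigma> DQ ` d)"
      using gm_surj[OF DQ CQ iso_emb[OF isoQ] iso_surj_all[OF isoQ] tokwf_gm[OF DQ]] .
    finally show ?thesis .
  qed
  show ?thesis using that et eq by blast
qed



definition R1 :: "('s, 't, 'a) net \<Rightarrow> (('e, 'a) poset \<Rightarrow> ('e, 'a) poset) \<Rightarrow> (('e, 'a) poset \<Rightarrow> 'e \<Rightarrow> 'e)
    \<Rightarrow> ('e, 'a) poset \<Rightarrow> ('e, 'a, 's) cmarking \<Rightarrow> ('e, 'a, 's) cmarking \<Rightarrow> bool" where
  "R1 N canon alpha Q x y \<longleftrightarrow> abstract canon Q \<and> (\<exists>P \<sigma> c1 c2. abstract canon P \<and> order_embedding \<sigma> P Q
     \<and> sim_AC N canon alpha P c1 c2 \<and> x = gm \<sigma> Q ` c1 \<and> y = gm \<sigma> Q ` c2)"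

definition R2 :: "('s, 't, 'a) net \<Rightarrow> (('e, 'a) poset \<Rightarrow> ('e, 'a) poset) \<Rightarrow> (('e, 'a) poset \<Rightarrow> 'e \<Rightarrow> 'e)
    \<Rightarrow> ('e, 'a) poset \<Rightarrow> ('e, 'a, 's) cmarking \<Rightarrow> ('e, 'a, 's) cmarking \<Rightarrow> bool" where
  "R2 N canon alpha P x y \<longleftrightarrow> abstract canon P \<and> pmarking N P x \<and> pmarking N P y \<and>
     (\<exists>Q \<sigma>. abstract canon Q \<and> order_embedding \<sigma> P Q \<and> sim_AC N canon alpha Q (gm \<sigma> Q ` x) (gm \<sigma> Q ` y))"

lemma R1_sym: "R1 N canon alpha Q x y \<Longrightarrow> R1 N canon alpha Q y x"
  unfolding R1_def using sim_sym by blast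

lemma R2_sym: "R2 N canon alpha P x y \<Longrightarrow> R2 N canon alpha P y x"
  unfolding R2_def using sim_sym by blast

lemma fwd1:
  fixes N :: "('s,'t,'a) net"
  assumes vc: "valid_canon canon alpha" and inf: "infinite (UNIV :: 'e set)"
    and abQ: "abstract canon (Q :: ('e,'a) poset)" and abP: "abstract canon P"
    and em: "order_embedding \<sigma> P Q" and sim: "sim_AC N canon alpha P c1 c2"
    and tr: "cgac N canon alpha Q (gm \<sigma> Q ` c1) K a T x''"
  shows "\<exists>y''. cgac N canon alpha Q (gm \<sigma> Q ` c2) K a T y'' \<and> R1 N canon alpha T x'' y''"
proof -
  have P: "is_poset P" using abP by (rule abstract_poset)
  have Q: "is_poset Q" using abQ by (rule abstract_poset)
  have fP: "fresh P \<notin> evs P" using fresh_notin[OF inf P] .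
  have fQ: "fresh Q \<notin> evs Q" using fresh_notin[OF inf Q] .
  have pm: "pmarking N P c1" "pmarking N P c2" using sim_pm[OF sim] by auto
  define DQ where "DQ = delta Q K (fresh Q) a"
  obtain dQ1 where stQ: "cgc N Q (gm \<sigma> Q ` c1) K (fresh Q) a DQ dQ1" and hT: "T = canon DQ"
    and hx: "x'' = rename_m (alpha DQ) dQ1"
    using tr[unfolded cgac_char[OF vc inf abQ]] DQ_def by blast
  obtain KP d1 where hK: "K = rename \<sigma> KP" and st1: "cgc N P c1 KP (fresh P) a (delta P KP (fresh P) a) d1"
    and hd1: "dQ1 = gm (\<sigma>(fresh P := fresh Q)) DQ ` d1"
    using cgc_pull[OF P Q em pm(1) fP stQ] DQ_def by blast
  define DP where "DP = delta P KP (fresh P) a"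
  let ?s = "\<sigma>(fresh P := fresh Q)"
  have tr1: "cgac N canon alpha P c1 KP a (canon DP) (rename_m (alpha DP) d1)"
    unfolding cgac_char[OF vc inf abP] using st1 DP_def by blast
  obtain c2'' where tr2: "cgac N canon alpha P c2 KP a (canon DP) c2''"
    and sim2: "sim_AC N canon alpha (canon DP) (rename_m (alpha DP) d1) c2''"
    using sim_step[OF sim tr1] by blast
  obtain d2 where st2: "cgc N P c2 KP (fresh P) a DP d2" and hc2: "c2'' = rename_m (alpha DP) d2"
    using tr2[unfolded cgac_char[OF vc inf abP]] DP_def by blast
  note m2 = cgc_map[OF P Q em fQ st2]
  have DQ': "delta Q (rename \<sigma> KP) (fresh Q) a = DQ" using hK DQ_def by simp
  have stQ2: "cgc N Q (gm \<sigma> Q ` c2) K (fresh Q) a DQ (gm ?s DQ ` d2)"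
    using m2(1) DQ' hK by simp
  have emb': "order_embedding ?s DP DQ" using m2(2) DQ' by simp
  define y'' where "y'' = rename_m (alpha DQ) (gm ?s DQ ` d2)"
  have trY: "cgac N canon alpha Q (gm \<sigma> Q ` c2) K a T y''"
    unfolding cgac_char[OF vc inf abQ] using stQ2 hT y''_def DQ_def by blast
  have DPp: "is_poset DP" using cgc_basic(6)[OF st1] DP_def by simp
  have DQp: "is_poset DQ" using cgc_basic(6)[OF stQ] .
  have tw1: "tokwf DP d1" using cgc_basic(7)[OF st1] DP_def by simp
  have tw2: "tokwf DP d2" using cgc_basic(7)[OF st2] .
  obtain \<tau> where et: "order_embedding \<tau> (canon DP) (canon DQ)"
    and eq: "\<And>d :: ('e,'a,'s) cmarking. tokwf DP d \<Longrightarrow> gm \<tau> (canon DQ) ` (rename_m (alpha DP) d) = rename_m (alpha DQ) (gm ?s DQ ` d)"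
    using transport[OF vc DPp DQp emb'] by blast
  have "R1 N canon alpha T x'' y''"
    unfolding R1_def
  proof (intro conjI exI)
    show "abstract canon T" using vc_abstract[OF vc DQp] hT by simp
    show "abstract canon (canon DP)" using vc_abstract[OF vc DPp] .
    show "order_embedding \<tau> (canon DP) T" using et hT by simp
    show "sim_AC N canon alpha (canon DP) (rename_m (alpha DP) d1) (rename_m (alpha DP) d2)"
      using sim2 hc2 by simp
    show "x'' = gm \<tau> T ` rename_m (alpha DP) d1" using eq[OF tw1] hT hx hd1 by simp
    show "y'' = gm \<tau> T ` rename_m (alpha DP) d2" using eq[OF tw2] hT y''_def by simp
  qed
  thus ?thesis using trY by blast
qed

lemma bisim1:
  assumes vc: "valid_canon canon alpha" and inf: "infinite (UNIV :: 'e set)"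
  shows "abs_causal_bisim N canon alpha (R1 N canon alpha :: ('e,'a) poset \<Rightarrow> _)"
  unfolding abs_causal_bisim_def
proof (rule allI, rule allI, rule allI, rule impI, intro conjI)
  fix Q :: "('e,'a) poset" and x y
  assume r: "R1 N canon alpha Q x y"
  then obtain P \<sigma> c1 c2 where abQ: "abstract canon Q" and abP: "abstract canon P"
    and em: "order_embedding \<sigma> P Q" and sim: "sim_AC N canon alpha P c1 c2"
    and hx: "x = gm \<sigma> Q ` c1" and hy: "y = gm \<sigma> Q ` c2" unfolding R1_def by blast
  have Q: "is_poset Q" using abQ by (rule abstract_poset)
  show "abstract canon Q" by (rule abQ)
  show "pmarking N Q x" using pmarking_gm[OF conjunct1[OF conjunct2[OF sim_pm[OF sim]]] Q] hx by simp
  show "pmarking N Q y" using pmarking_gm[OF conjunct2[OF conjunct2[OF sim_pm[OF sim]]] Q] hy by simp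
  show "\<forall>K a T c1'. cgac N canon alpha Q x K a T c1' \<longrightarrow>
          (\<exists>c2'. cgac N canon alpha Q y K a T c2' \<and> R1 N canon alpha T c1' c2')"
    using fwd1[OF vc inf abQ abP em sim] hx hy by blast
  show "\<forall>K a T c2'. cgac N canon alpha Q y K a T c2' \<longrightarrow>
          (\<exists>c1'. cgac N canon alpha Q x K a T c1' \<and> R1 N canon alpha T c1' c2')"
  proof (intro allI impI)
    fix K a T c2' assume "cgac N canon alpha Q y K a T c2'"
    then obtain c1' where "cgac N canon alpha Q x K a T c1'" "R1 N canon alpha T c2' c1'"
      using fwd1[OF vc inf abQ abP em sim_sym[OF sim]] hx hy by blast
    thus "\<exists>c1'. cgac N canon alpha Q x K a T c1' \<and> R1 N canon alpha T c1' c2'" using R1_sym by blast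
  qed
qed

lemma fwd2:
  fixes N :: "('s,'t,'a) net"
  assumes net: "is_net N" and vc: "valid_canon canon alpha" and inf: "infinite (UNIV :: 'e set)"
    and r: "R2 N canon alpha (P :: ('e,'a) poset) x y"
    and tr: "cgac N canon alpha P x K a T x''"
  shows "\<exists>y''. cgac N canon alpha P y K a T y'' \<and> R2 N canon alpha T x'' y''"
proof -
  obtain Q \<sigma> where abP: "abstract canon P" and pmx: "pmarking N P x" and pmy: "pmarking N P y"
    and abQ: "abstract canon Q" and em: "order_embedding \<sigma> P Q"
    and sim: "sim_AC N canon alpha Q (gm \<sigma> Q ` x) (gm \<sigma> Q ` y)"
    using r unfolding R2_def by blast
  have P: "is_poset P" using abP by (rule abstract_poset)
  have Q: "is_poset Q" using abQ by (rule abstract_poset)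
  have fP: "fresh P \<notin> evs P" using fresh_notin[OF inf P] .
  have fQ: "fresh Q \<notin> evs Q" using fresh_notin[OF inf Q] .
  define DP where "DP = delta P K (fresh P) a"
  obtain d1 where st1: "cgc N P x K (fresh P) a DP d1" and hT: "T = canon DP"
    and hx: "x'' = rename_m (alpha DP) d1"
    using tr[unfolded cgac_char[OF vc inf abP]] DP_def by blast
  let ?s = "\<sigma>(fresh P := fresh Q)"
  define DQ where "DQ = delta Q (rename \<sigma> K) (fresh Q) a"
  note m1 = cgc_map[OF P Q em fQ st1]
  have stQ1: "cgc N Q (gm \<sigma> Q ` x) (rename \<sigma> K) (fresh Q) a DQ (gm ?s DQ ` d1)" using m1(1) DQ_def by simp
  have emb': "order_embedding ?s DP DQ" using m1(2) DQ_def by simp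
  define xQ where "xQ = rename_m (alpha DQ) (gm ?s DQ ` d1)"
  have trQ: "cgac N canon alpha Q (gm \<sigma> Q ` x) (rename \<sigma> K) a (canon DQ) xQ"
    unfolding cgac_char[OF vc inf abQ] using stQ1 xQ_def DQ_def by blast
  obtain yQ where trQ2: "cgac N canon alpha Q (gm \<sigma> Q ` y) (rename \<sigma> K) a (canon DQ) yQ"
    and simQ: "sim_AC N canon alpha (canon DQ) xQ yQ" using sim_step[OF sim trQ] by blast
  obtain dQ2 where stQ2: "cgc N Q (gm \<sigma> Q ` y) (rename \<sigma> K) (fresh Q) a DQ dQ2" and hyQ: "yQ = rename_m (alpha DQ) dQ2"
    using trQ2[unfolded cgac_char[OF vc inf abQ]] DQ_def by blast
  obtain K2 d2 where hK2: "rename \<sigma> K = rename \<sigma> K2" and st2: "cgc N P y K2 (fresh P) a (delta P K2 (fresh P) a) d2"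
    and hd2: "dQ2 = gm ?s DQ ` d2"
    using cgc_pull[OF P Q em pmy fP stQ2] DQ_def by blast
  have KK: "K2 = K" using rename_inj[OF P Q em cgc_basic(1)[OF st2] cgc_basic(1)[OF st1]] hK2 by simp
  have st2': "cgc N P y K (fresh P) a DP d2" using st2 KK DP_def by simp
  define y'' where "y'' = rename_m (alpha DP) d2"
  have trY: "cgac N canon alpha P y K a T y''"
    unfolding cgac_char[OF vc inf abP] using st2' hT y''_def DP_def by blast
  have DPp: "is_poset DP" using cgc_basic(6)[OF st1] .
  have DQp: "is_poset DQ" using cgc_basic(6)[OF stQ1] .
  have CP: "is_poset (canon DP)" using vc_poset[OF vc DPp] .
  have CQ: "is_poset (canon DQ)" using vc_poset[OF vc DQp] .
  have tw1: "tokwf DP d1" using cgc_basic(7)[OF st1] .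
  have tw2: "tokwf DP d2" using cgc_basic(7)[OF st2'] .
  obtain \<tau> where et: "order_embedding \<tau> (canon DP) (canon DQ)"
    and eq: "\<And>d :: ('e,'a,'s) cmarking. tokwf DP d \<Longrightarrow> gm \<tau> (canon DQ) ` (rename_m (alpha DP) d) = rename_m (alpha DQ) (gm ?s DQ ` d)"
    using transport[OF vc DPp DQp emb'] by blast
  have isoP: "poset_iso (alpha DP) DP (canon DP)" using vc_iso[OF vc DPp] .
  have eP: "order_embedding (\<tau> \<circ> alpha DP) DP (canon DQ)" using emb_comp[OF iso_emb[OF isoP] et] .
  have pmQ: "pmarking N (canon DQ) xQ" "pmarking N (canon DQ) yQ" using sim_pm[OF simQ] by auto
  have finv: "finite d" if tw: "tokwf DP d" and h: "gm \<tau> (canon DQ) ` (rename_m (alpha DP) d) = z"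
    and pz: "pmarking N (canon DQ) z" for d z
  proof -
    have "rename_m (alpha DP) d = gm (alpha DP) (canon DP) ` d"
      using gm_surj[OF DPp CP iso_emb[OF isoP] iso_surj_all[OF isoP] tw] by simp
    hence "z = gm (\<tau> \<circ> alpha DP) (canon DQ) ` d"
      using h gm_comp[OF CP CQ emb_morph[OF et] emb_morph[OF iso_emb[OF isoP]] tw] by simp
    moreover have "finite z" using pz unfolding pmarking_def causal_marking_def by blast
    ultimately show "finite d" using finite_gm_inv[OF DPp CQ eP tw] by simp
  qed
  have fin1: "finite d1" using finv[OF tw1 _ pmQ(1)] eq[OF tw1] xQ_def by simp
  have fin2: "finite d2" using finv[OF tw2 _ pmQ(2)] eq[OF tw2] hyQ hd2 by simp
  have pd1: "pmarking N DP d1" using cgc_pmarking[OF net st1 fin1] .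
  have pd2: "pmarking N DP d2" using cgc_pmarking[OF net st2' fin2] .
  have px: "pmarking N T x''"
  proof -
    have "x'' = gm (alpha DP) (canon DP) ` d1"
      using gm_surj[OF DPp CP iso_emb[OF isoP] iso_surj_all[OF isoP] tw1] hx by simp
    thus ?thesis using pmarking_gm[OF pd1 CP] hT by simp
  qed
  have py: "pmarking N T y''"
  proof -
    have "y'' = gm (alpha DP) (canon DP) ` d2"
      using gm_surj[OF DPp CP iso_emb[OF isoP] iso_surj_all[OF isoP] tw2] y''_def by simp
    thus ?thesis using pmarking_gm[OF pd2 CP] hT by simp
  qed
  have "R2 N canon alpha T x'' y''"
    unfolding R2_def
  proof (intro conjI exI)
    show "abstract canon T" using vc_abstract[OF vc DPp] hT by simp
    show "pmarking N T x''" by (rule px)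
    show "pmarking N T y''" by (rule py)
    show "abstract canon (canon DQ)" using vc_abstract[OF vc DQp] .
    show "order_embedding \<tau> T (canon DQ)" using et hT by simp
    show "sim_AC N canon alpha (canon DQ) (gm \<tau> (canon DQ) ` x'') (gm \<tau> (canon DQ) ` y'')"
      using simQ eq[OF tw1] eq[OF tw2] hx y''_def xQ_def hyQ hd2 by simp
  qed
  thus ?thesis using trY by blast
qed

lemma bisim2:
  assumes net: "is_net N" and vc: "valid_canon canon alpha" and inf: "infinite (UNIV :: 'e set)"
  shows "abs_causal_bisim N canon alpha (R2 N canon alpha :: ('e,'a) poset \<Rightarrow> _)"
  unfolding abs_causal_bisim_def
proof (rule allI, rule allI, rule allI, rule impI, intro conjI)
  fix P :: "('e,'a) poset" and x y
  assume r: "R2 N canon alpha P x y"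
  thus "abstract canon P" "pmarking N P x" "pmarking N P y" unfolding R2_def by blast+
  show "\<forall>K a T c1'. cgac N canon alpha P x K a T c1' \<longrightarrow>
          (\<exists>c2'. cgac N canon alpha P y K a T c2' \<and> R2 N canon alpha T c1' c2')"
    using fwd2[OF net vc inf r] by blast
  show "\<forall>K a T c2'. cgac N canon alpha P y K a T c2' \<longrightarrow>
          (\<exists>c1'. cgac N canon alpha P x K a T c1' \<and> R2 N canon alpha T c1' c2')"
  proof (intro allI impI)
    fix K a T c2' assume "cgac N canon alpha P y K a T c2'"
    then obtain c1' where "cgac N canon alpha P x K a T c1'" "R2 N canon alpha T c2' c1'"
      using fwd2[OF net vc inf R2_sym[OF r]] by blast
    thus "\<exists>c1'. cgac N canon alpha P x K a T c1' \<and> R2 N canon alpha T c1' c2'" using R2_sym by blast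
  qed
qed

theorem theorem2:
  fixes N :: "('s, 't, 'a) net"
    and canon :: "('e, 'a) poset \<Rightarrow> ('e, 'a) poset"
    and alpha :: "('e, 'a) poset \<Rightarrow> 'e \<Rightarrow> 'e"
    and P Q :: "('e, 'a) poset"
    and \<sigma> :: "'e \<Rightarrow> 'e"
    and c c' :: "('e, 'a, 's) cmarking"
  assumes "is_net N"
    and "infinite (UNIV :: 'e set)"
    and "valid_canon canon alpha"
    and "abstract canon P" and "abstract canon Q"
    and "order_embedding \<sigma> P Q"
    and "causal_marking N c" and "causal_marking N c'"
    and "pmarking N P c" and "pmarking N P c'"
  shows "sim_AC N canon alpha P c c' \<longleftrightarrow>
         sim_AC N canon alpha Q (down_m Q (rename_m \<sigma> c)) (down_m Q (rename_m \<sigma> c'))"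
proof
  assume s: "sim_AC N canon alpha P c c'"
  have "R1 N canon alpha Q (gm \<sigma> Q ` c) (gm \<sigma> Q ` c')"
    unfolding R1_def using assms(4-6) s by blast
  hence "sim_AC N canon alpha Q (gm \<sigma> Q ` c) (gm \<sigma> Q ` c')"
    by (rule sim_coind[OF bisim1[OF assms(3,2)]])
  thus "sim_AC N canon alpha Q (down_m Q (rename_m \<sigma> c)) (down_m Q (rename_m \<sigma> c'))"
    by (simp add: down_rename_gm)
next
  assume s: "sim_AC N canon alpha Q (down_m Q (rename_m \<sigma> c)) (down_m Q (rename_m \<sigma> c'))"
  have s': "sim_AC N canon alpha Q (gm \<sigma> Q ` c) (gm \<sigma> Q ` c')" using s by (simp add: down_rename_gm)
  have ex: "\<exists>Q' \<sigma>'. abstract canon Q' \<and> order_embedding \<sigma>' P Q' \<and>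
      sim_AC N canon alpha Q' (gm \<sigma>' Q' ` c) (gm \<sigma>' Q' ` c')"
    by (rule exI[of _ Q], rule exI[of _ \<sigma>]) (simp add: assms(5,6) s')
  have "R2 N canon alpha P c c'"
    unfolding R2_def using assms(4,9,10) ex by blast
  thus "sim_AC N canon alpha P c c'"
    by (rule sim_coind[OF bisim2[OF assms(1,3,2)]])
qed


end
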